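(* Let $\kappa:\operatorname{Arb}\to\operatorname{Mould}$ be the unique operad morphism with $\kappa([2\triangleleft 1])=\frac{1}{u_1(u_1+u_2)}$ and $\kappa([1][2])=\frac{1}{u_1u_2}$. Then for every shrub $P$, $\kappa(P)=f_P$.
   Context: A shrub $P$ on a finite set $I$ is a set $E$ of edges (unordered pairs of distinct elements of $I$) with a height function $h_P:I\to\mathbb{N}$; $j$ covers $i$ if $\{i,j\}\in E$ and $h_P(j)=h_P(i)+1$. Axioms: (1) edges join vertices whose heights differ by $1$; (2) every vertex of positive height covers some vertex; (3) no four distinct $a,b,c,d$ with $a$ covering $b$ and $c$, $c$ covering $d$, $\{b,d\}\notin E$; (4) no five distinct $a,b,c,d,e$ with $a$ covering $c,d$, $b$ covering $d,e$, $\{a,e\}\notin E$, $\{b,c\}\notin E$. $\operatorname{Arb}$ is the set-theoretic operad with $\operatorname{Arb}(I)$ the set of shrubs on $I$, relabelling action, unit the one-vertex shrub, and composition $P\circ_i P'$ defined as the shrub on $(I\setminus\{i\})\sqcup I'$ with height $h_P$ on $I\setminus\{i\}$ and $h_{P'}+h_P(i)$ on $I'$, whose edges are the edges of $P$ not containing $i$, the edges of $P'$, and all pairs $\{j,k\}$ with $j$ adjacent to $i$ in $P$ and $k$ of height $0$ in $P'$. $[a][b]$: shrub on $\{a,b\}$ without edges; $[a\triangleleft b]$: shrub on $\{a,b\}$ with edge $\{a,b\}$, $h(a)=0$, $h(b)=1$. $\operatorname{Mould}(I)=\mathbb{Q}(u_i:i\in I)$ with renaming action and $f\circ_i g=(\sum_{j\in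 J}u_j)\,g\,f|_{u_i=\sum_{j\in J}u_j}$. A vertex is ramified if it covers at least two distinct vertices; two ramified vertices are equivalent if they cover the same set of vertices; $\operatorname{Ram}(P)$ is the set of equivalence classes, and for $r\in\operatorname{Ram}(P)$, $r^-$ is the common set of vertices covered by elements of $r$. For $S\subseteq I$, $\langle S\rangle_P$ is the set of $j\in I$ such that every descending path from $j$ (each vertex covering the next) to a vertex of height $0$ meets $S$. $P\setminus\langle r\rangle_P$ is the shrub obtained by restricting $P$ to $I\setminus\langle r\rangle_P$. With $u[S]=\sum_{k\in S}u_k$, $$f_P=\frac{1}{\prod_{i\in I}u[\langle\{i\}\rangle_P]}\prod_{r\in\operatorname{Ram}(P)}\frac{u[\langle r^-\rangle_{P\setminus\langle r\rangle_P}]}{u[\langle r^-\rangle_P]}.$$ *)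

theory Defs
  imports Complex_Main "HOL-Library.Poly_Mapping" "HOL-Computational_Algebra.Fraction_Field"
begin

text \<open>Multivariate polynomials over Q in the variables u_n (n a natural number):
  a monomial is a finitely supported exponent vector, a polynomial a finitely
  supported coefficient map on monomials.  This is an integral domain, and its
  fraction field is the field of rational functions in countably many variables.\<close>

type_synonym mpoly = "(nat \<Rightarrow>\<^sub>0 nat) \<Rightarrow>\<^sub>0 rat"
type_synonym rfun = "mpoly fract"

definition cst :: "rat \<Rightarrow> rfun" where
  "cst c = Fract (Poly_Mapping.single 0 c) 1"

definition u :: "nat \<Rightarrow> rfun" where
  "u n = Fract (Poly_Mapping.single (Poly_Mapping.single n 1) 1) 1"

definition usum :: "nat set \<Rightarrow> rfun" where
  "usum S = (\<Sum>k\<in>S. u k)"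

definition pvars :: "mpoly \<Rightarrow> nat set" where
  "pvars p = (\<Union>m\<in>Poly_Mapping.keys p. Poly_Mapping.keys m)"

definition peval :: "(nat \<Rightarrow> rfun) \<Rightarrow> mpoly \<Rightarrow> rfun" where
  "peval g p = (\<Sum>m\<in>Poly_Mapping.keys p.
      cst (Poly_Mapping.lookup p m) * (\<Prod>n\<in>Poly_Mapping.keys m. g n ^ Poly_Mapping.lookup m n))"

text \<open>Substitution u_n := g n in a rational function (well defined, independent
  of the chosen representative, whenever some representative has a denominator
  not evaluating to 0; this is the case for all uses below).\<close>
definition rsubst :: "(nat \<Rightarrow> rfun) \<Rightarrow> rfun \<Rightarrow> rfun" where
  "rsubst g F = (THE r. \<exists>a b. b \<noteq> 0 \<and> peval g b \<noteq> 0 \<and> F = Fract a b \<and> r = peval g a / peval g b)"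

definition mould :: "nat set \<Rightarrow> rfun set" where
  "mould I = {F. \<exists>a b. b \<noteq> 0 \<and> pvars a \<subseteq> I \<and> pvars b \<subseteq> I \<and> F = Fract a b}"

definition mrename :: "(nat \<Rightarrow> nat) \<Rightarrow> rfun \<Rightarrow> rfun" where
  "mrename \<sigma> F = rsubst (\<lambda>n. u (\<sigma> n)) F"

definition mcomp :: "nat set \<Rightarrow> nat \<Rightarrow> nat set \<Rightarrow> rfun \<Rightarrow> rfun \<Rightarrow> rfun" where
  "mcomp I i J f g = usum J * g * rsubst (\<lambda>n. if n = i then usum J else u n) f"

text \<open>A shrub: vertex set, edges (2-element sets of vertices), height function
  (normalised to 0 outside the vertex set, so that representations are canonical).\<close>
record shrub =
  verts :: "nat set"
  edges :: "nat set set"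
  ht :: "nat \<Rightarrow> nat"

definition covers :: "shrub \<Rightarrow> nat \<Rightarrow> nat \<Rightarrow> bool" where
  "covers P j i \<longleftrightarrow> {i, j} \<in> edges P \<and> ht P j = ht P i + 1"

definition is_shrub :: "shrub \<Rightarrow> bool" where
  "is_shrub P \<longleftrightarrow>
     finite (verts P) \<and> verts P \<noteq> {} \<and>
     (\<forall>e\<in>edges P. \<exists>a b. a \<in> verts P \<and> b \<in> verts P \<and> a \<noteq> b \<and> e = {a, b}) \<and>
     (\<forall>n. n \<notin> verts P \<longrightarrow> ht P n = 0) \<and>
     \<comment> \<open>axiom (1)\<close>
     (\<forall>a b. {a, b} \<in> edges P \<longrightarrow> ht P a = ht P b + 1 \<or> ht P b = ht P a + 1) \<and>
     \<comment> \<open>axiom (2)\<close>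
     (\<forall>j\<in>verts P. ht P j > 0 \<longrightarrow> (\<exists>i. covers P j i)) \<and>
     \<comment> \<open>axiom (3)\<close>
     \<not> (\<exists>a b c d. distinct [a, b, c, d] \<and> covers P a b \<and> covers P a c \<and> covers P c d
            \<and> {b, d} \<notin> edges P) \<and>
     \<comment> \<open>axiom (4)\<close>
     \<not> (\<exists>a b c d e. distinct [a, b, c, d, e] \<and> covers P a c \<and> covers P a d \<and>
            covers P b d \<and> covers P b e \<and> {a, e} \<notin> edges P \<and> {b, c} \<notin> edges P)"

definition unit_shrub :: "nat \<Rightarrow> shrub" where
  "unit_shrub n = \<lparr>verts = {n}, edges = {}, ht = (\<lambda>_. 0)\<rparr>"

definition two_roots :: "nat \<Rightarrow> nat \<Rightarrow> shrub" where
  "two_roots a b = \<lparr>verts = {a, b}, edges = {}, ht = (\<lambda>_. 0)\<rparr>"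

text \<open>[a \<triangleleft> b]: edge {a,b}, h(a) = 0, h(b) = 1.\<close>
definition edge_shrub :: "nat \<Rightarrow> nat \<Rightarrow> shrub" where
  "edge_shrub a b = \<lparr>verts = {a, b}, edges = {{a, b}}, ht = (\<lambda>n. if n = b then 1 else 0)\<rparr>"

definition shrub_rename :: "(nat \<Rightarrow> nat) \<Rightarrow> shrub \<Rightarrow> shrub" where
  "shrub_rename \<sigma> P = \<lparr>verts = \<sigma> ` verts P, edges = (\<lambda>e. \<sigma> ` e) ` edges P,
                        ht = (\<lambda>n. ht P (inv \<sigma> n))\<rparr>"

text \<open>Partial composition P o_i Q (used when verts Q is disjoint from verts P - {i}).\<close>
definition shrub_comp :: "shrub \<Rightarrow> nat \<Rightarrow> shrub \<Rightarrow> shrub" where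
  "shrub_comp P i Q =
    \<lparr>verts = (verts P - {i}) \<union> verts Q,
     edges = {e \<in> edges P. i \<notin> e} \<union> edges Q \<union>
             {{j, k} | j k. {j, i} \<in> edges P \<and> k \<in> verts Q \<and> ht Q k = 0},
     ht = (\<lambda>n. if n \<in> verts P - {i} then ht P n
               else if n \<in> verts Q then ht Q n + ht P i else 0)\<rparr>"

text \<open>Operad morphisms Arb \<rightarrow> Mould: species morphism (values in Mould(I),
  equivariant), preserving units (the unit of Mould is 1/u_x) and partial compositions.\<close>
definition arb_mould_morphism :: "(shrub \<Rightarrow> rfun) \<Rightarrow> bool" where
  "arb_mould_morphism \<kappa> \<longleftrightarrow>
     (\<forall>P. is_shrub P \<longrightarrow> \<kappa> P \<in> mould (verts P)) \<and>
     (\<forall>n. \<kappa> (unit_shrub n) = 1 / u n) \<and>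
     (\<forall>\<sigma> P. bij \<sigma> \<and> is_shrub P \<longrightarrow> \<kappa> (shrub_rename \<sigma> P) = mrename \<sigma> (\<kappa> P)) \<and>
     (\<forall>P Q i. is_shrub P \<and> is_shrub Q \<and> i \<in> verts P \<and> verts Q \<inter> (verts P - {i}) = {} \<longrightarrow>
        \<kappa> (shrub_comp P i Q) = mcomp (verts P) i (verts Q) (\<kappa> P) (\<kappa> Q))"

definition desc_path :: "shrub \<Rightarrow> nat list \<Rightarrow> bool" where
  "desc_path P xs \<longleftrightarrow> xs \<noteq> [] \<and> hd xs \<in> verts P \<and>
     (\<forall>t. Suc t < length xs \<longrightarrow> covers P (xs ! t) (xs ! Suc t)) \<and> ht P (last xs) = 0"

definition gen :: "shrub \<Rightarrow> nat set \<Rightarrow> nat set" where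
  "gen P S = {j \<in> verts P. \<forall>xs. desc_path P xs \<and> hd xs = j \<longrightarrow> set xs \<inter> S \<noteq> {}}"

definition below :: "shrub \<Rightarrow> nat \<Rightarrow> nat set" where
  "below P v = {i. covers P v i}"

definition ramified :: "shrub \<Rightarrow> nat \<Rightarrow> bool" where
  "ramified P v \<longleftrightarrow> v \<in> verts P \<and> (\<exists>a b. a \<noteq> b \<and> covers P v a \<and> covers P v b)"

definition Ram :: "shrub \<Rightarrow> nat set set" where
  "Ram P = {{v. ramified P v \<and> below P v = below P w} | w. ramified P w}"

definition rminus :: "shrub \<Rightarrow> nat set \<Rightarrow> nat set" where
  "rminus P r = the_elem (below P ` r)"

definition restrict_shrub :: "shrub \<Rightarrow> nat set \<Rightarrow> shrub" where
  "restrict_shrub P X = \<lparr>verts = verts P \<inter> X, edges = {e \<in> edges P. e \<subseteq> X},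
                          ht = (\<lambda>n. if n \<in> verts P \<inter> X then ht P n else 0)\<rparr>"

definition f_shrub :: "shrub \<Rightarrow> rfun" where
  "f_shrub P =
     (1 / (\<Prod>i\<in>verts P. usum (gen P {i}))) *
     (\<Prod>r\<in>Ram P. usum (gen (restrict_shrub P (verts P - gen P r)) (rminus P r))
                   / usum (gen P (rminus P r)))"

end

theory Submission
  imports Defs
begin


definition mmono :: "(nat \<Rightarrow> rfun) \<Rightarrow> (nat \<Rightarrow>\<^sub>0 nat) \<Rightarrow> rfun" where
  "mmono g m = (\<Prod>n\<in>Poly_Mapping.keys m. g n ^ Poly_Mapping.lookup m n)"

lemma mmono_superset:
  assumes "finite K" "Poly_Mapping.keys m \<subseteq> K"
  shows "mmono g m = (\<Prod>n\<in>K. g n ^ Poly_Mapping.lookup m n)"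
  unfolding mmono_def
  by (rule prod.mono_neutral_left) (use assms in \<open>auto simp: in_keys_iff\<close>)

lemma mmono_add: "mmono g (m1 + m2) = mmono g m1 * mmono g m2"
proof -
  let ?K = "Poly_Mapping.keys m1 \<union> Poly_Mapping.keys m2"
  have "mmono g (m1 + m2) = (\<Prod>n\<in>?K. g n ^ Poly_Mapping.lookup (m1+m2) n)"
    by (rule mmono_superset) (auto simp: keys_add)
  also have "\<dots> = (\<Prod>n\<in>?K. g n ^ Poly_Mapping.lookup m1 n) * (\<Prod>n\<in>?K. g n ^ Poly_Mapping.lookup m2 n)"
    by (simp add: lookup_add power_add prod.distrib)
  also have "\<dots> = mmono g m1 * mmono g m2"
    by (simp add: mmono_superset[of ?K])
  finally show ?thesis .
qed

lemma mmono_zero [simp]: "mmono g 0 = 1"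
  by (simp add: mmono_def)

lemma cst_zero [simp]: "cst 0 = 0"
  by (simp add: cst_def Zero_fract_def)

lemma cst_one [simp]: "cst 1 = 1"
  by (simp add: cst_def One_fract_def one_poly_mapping_def)

lemma cst_add: "cst (a + b) = cst a + cst b"
  by (simp add: cst_def single_add)

lemma cst_mult: "cst (a * b) = cst a * cst b"
  by (simp add: cst_def mult_single)

lemma peval_alt: "peval g p = (\<Sum>m\<in>Poly_Mapping.keys p. cst (Poly_Mapping.lookup p m) * mmono g m)"
  by (simp add: peval_def mmono_def)

lemma peval_superset:
  assumes "finite K" "Poly_Mapping.keys p \<subseteq> K"
  shows "peval g p = (\<Sum>m\<in>K. cst (Poly_Mapping.lookup p m) * mmono g m)"
  unfolding peval_alt
  by (rule sum.mono_neutral_left) (use assms in \<open>auto simp: in_keys_iff\<close>)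

lemma peval_add: "peval g (p + q) = peval g p + peval g q"
proof -
  let ?K = "Poly_Mapping.keys p \<union> Poly_Mapping.keys q"
  have "peval g (p + q) = (\<Sum>m\<in>?K. cst (Poly_Mapping.lookup (p+q) m) * mmono g m)"
    by (rule peval_superset) (auto simp: keys_add)
  also have "\<dots> = (\<Sum>m\<in>?K. cst (Poly_Mapping.lookup p m) * mmono g m) + (\<Sum>m\<in>?K. cst (Poly_Mapping.lookup q m) * mmono g m)"
    by (simp add: lookup_add cst_add distrib_right sum.distrib)
  also have "\<dots> = peval g p + peval g q"
    by (simp add: peval_superset[of ?K])
  finally show ?thesis .
qed

lemma peval_zero [simp]: "peval g 0 = 0"
  by (simp add: peval_def)

lemma peval_single: "peval g (Poly_Mapping.single m c) = cst c * mmono g m"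
  by (simp add: peval_alt)

lemma update_eq_add: "a \<notin> Poly_Mapping.keys f \<Longrightarrow> Poly_Mapping.update a b f = f + Poly_Mapping.single a b"
  by (rule poly_mapping_eqI) (auto simp: lookup_update lookup_add lookup_single in_keys_iff when_def)

lemma peval_single_mult: "peval g (Poly_Mapping.single a b * q) = cst b * mmono g a * peval g q"
proof (induction q rule: update_induct)
  case const
  then show ?case by simp
next
  case (update f c d)
  then show ?case
    by (simp add: update_eq_add distrib_left peval_add mult_single peval_single mmono_add cst_mult)
qed

lemma peval_mult: "peval g (p * q) = peval g p * peval g q"
proof (induction p rule: update_induct)
  case const
  then show ?case by simp
next
  case (update f a b)
  then show ?case
    by (simp add: update_eq_add distrib_right peval_add peval_single_mult peval_single)
qed

lemma peval_one [simp]: "peval g 1 = 1"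
  using peval_single[of g 0 1] by (simp add: one_poly_mapping_def)


definition goodr :: "(nat \<Rightarrow> rfun) \<Rightarrow> rfun \<Rightarrow> bool" where
  "goodr g F \<longleftrightarrow> (\<exists>a b. b \<noteq> 0 \<and> peval g b \<noteq> 0 \<and> F = Fract a b)"

lemma rsubst_Fract:
  assumes "b \<noteq> 0" "peval g b \<noteq> 0"
  shows "rsubst g (Fract a b) = peval g a / peval g b"
  unfolding rsubst_def
proof (rule the_equality)
  show "\<exists>a' b'. b' \<noteq> 0 \<and> peval g b' \<noteq> 0 \<and> Fract a b = Fract a' b' \<and> peval g a / peval g b = peval g a' / peval g b'"
    using assms by blast
next
  fix r assume "\<exists>a' b'. b' \<noteq> 0 \<and> peval g b' \<noteq> 0 \<and> Fract a b = Fract a' b' \<and> r = peval g a' / peval g b'"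
  then obtain a' b' where h: "b' \<noteq> 0" "peval g b' \<noteq> 0" "Fract a b = Fract a' b'" "r = peval g a' / peval g b'"
    by blast
  from h(3) assms(1) h(1) have "a * b' = a' * b" by (simp add: eq_fract)
  hence "peval g (a * b') = peval g (a' * b)" by simp
  hence "peval g a * peval g b' = peval g a' * peval g b" by (simp add: peval_mult)
  hence "peval g a' = peval g a * peval g b' / peval g b" using assms(2) by (simp add: field_simps)
  with h(2) h(4) show "r = peval g a / peval g b"
    by simp
qed

lemma goodrI: "b \<noteq> 0 \<Longrightarrow> peval g b \<noteq> 0 \<Longrightarrow> goodr g (Fract a b)"
  unfolding goodr_def by blast

lemma goodr_rsubst:
  assumes "goodr g F"
  obtains a b where "b \<noteq> 0" "peval g b \<noteq> 0" "F = Fract a b" "rsubst g F = peval g a / peval g b"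
  using assms rsubst_Fract unfolding goodr_def by blast

lemma goodr_mult:
  assumes "goodr g F" "goodr g G"
  shows "goodr g (F * G) \<and> rsubst g (F * G) = rsubst g F * rsubst g G"
proof -
  obtain a b where ab: "b \<noteq> 0" "peval g b \<noteq> 0" "F = Fract a b" "rsubst g F = peval g a / peval g b"
    using assms(1) goodr_rsubst by blast
  obtain c d where cd: "d \<noteq> 0" "peval g d \<noteq> 0" "G = Fract c d" "rsubst g G = peval g c / peval g d"
    using assms(2) goodr_rsubst by blast
  have e: "F * G = Fract (a * c) (b * d)" using ab cd by simp
  have nz: "b * d \<noteq> 0" "peval g (b * d) \<noteq> 0" using ab cd by (simp_all add: peval_mult)
  show ?thesis
    unfolding e using goodrI[OF nz] rsubst_Fract[OF nz] ab cd by (simp add: peval_mult)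
qed

lemma goodr_add:
  assumes "goodr g F" "goodr g G"
  shows "goodr g (F + G) \<and> rsubst g (F + G) = rsubst g F + rsubst g G"
proof -
  obtain a b where ab: "b \<noteq> 0" "peval g b \<noteq> 0" "F = Fract a b" "rsubst g F = peval g a / peval g b"
    using assms(1) goodr_rsubst by blast
  obtain c d where cd: "d \<noteq> 0" "peval g d \<noteq> 0" "G = Fract c d" "rsubst g G = peval g c / peval g d"
    using assms(2) goodr_rsubst by blast
  have e: "F + G = Fract (a * d + c * b) (b * d)" using ab cd by simp
  have nz: "b * d \<noteq> 0" "peval g (b * d) \<noteq> 0" using ab cd by (simp_all add: peval_mult)
  have "rsubst g (F + G) = peval g (a * d + c * b) / peval g (b * d)"
    unfolding e by (rule rsubst_Fract[OF nz])
  also have "\<dots> = (peval g a * peval g d + peval g c * peval g b) / (peval g b * peval g d)"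
    by (simp add: peval_mult peval_add)
  also have "\<dots> = rsubst g F + rsubst g G" using ab cd by (simp add: field_simps)
  finally show ?thesis
    unfolding e using goodrI[OF nz] by simp
qed

lemma goodr_inverse:
  assumes "goodr g F" "rsubst g F \<noteq> 0"
  shows "goodr g (inverse F) \<and> rsubst g (inverse F) = inverse (rsubst g F)"
proof -
  obtain a b where ab: "b \<noteq> 0" "peval g b \<noteq> 0" "F = Fract a b" "rsubst g F = peval g a / peval g b"
    using assms(1) goodr_rsubst by blast
  have pa: "peval g a \<noteq> 0" using ab assms(2) by auto
  hence a0: "a \<noteq> 0" by auto
  have e: "inverse F = Fract b a" using ab by simp
  show ?thesis unfolding e using goodrI[OF a0 pa] rsubst_Fract[OF a0 pa] ab by simp
qed

lemma goodr_divide: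
  assumes "goodr g F" "goodr g G" "rsubst g G \<noteq> 0"
  shows "goodr g (F / G) \<and> rsubst g (F / G) = rsubst g F / rsubst g G"
  using goodr_mult[OF assms(1) conjunct1[OF goodr_inverse[OF assms(2,3)]]]
    goodr_inverse[OF assms(2,3)]
  by (simp add: divide_inverse)

lemma goodr_one: "goodr g 1 \<and> rsubst g 1 = 1"
proof -
  have g1: "goodr g (Fract 1 1)" by (rule goodrI) simp_all
  have r1: "rsubst g (Fract 1 1) = 1" by (subst rsubst_Fract) simp_all
  show ?thesis using g1 r1 by (metis One_fract_def)
qed

lemma goodr_zero: "goodr g 0 \<and> rsubst g 0 = 0"
proof -
  have g1: "goodr g (Fract 0 1)" by (rule goodrI) simp_all
  have r1: "rsubst g (Fract 0 1) = 0" by (subst rsubst_Fract) simp_all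
  show ?thesis using g1 r1 by (metis Zero_fract_def)
qed

lemma goodr_u: "goodr g (u n) \<and> rsubst g (u n) = g n"
proof -
  have "peval g (Poly_Mapping.single (Poly_Mapping.single n 1) 1) = g n"
    by (simp add: peval_single mmono_def)
  moreover have "(1::mpoly) \<noteq> 0" "peval g 1 \<noteq> 0" by simp_all
  ultimately show ?thesis unfolding u_def using goodrI rsubst_Fract by simp
qed

lemma goodr_usum: "finite T \<Longrightarrow> goodr g (usum T) \<and> rsubst g (usum T) = (\<Sum>k\<in>T. g k)"
  unfolding usum_def
proof (induction T rule: finite_induct)
  case empty
  then show ?case using goodr_zero by simp
next
  case (insert x F)
  then show ?case using goodr_add[OF conjunct1[OF goodr_u] conjunct1[OF insert(3)]] goodr_u
    by simp
qed

lemma goodr_prod: "finite A \<Longrightarrow> (\<And>i. i \<in> A \<Longrightarrow> goodr g (F i)) \<Longrightarrow>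
   goodr g (\<Prod>i\<in>A. F i) \<and> rsubst g (\<Prod>i\<in>A. F i) = (\<Prod>i\<in>A. rsubst g (F i))"
proof (induction A rule: finite_induct)
  case empty
  then show ?case using goodr_one by simp
next
  case (insert x F)
  then show ?case using goodr_mult by simp
qed

lemma rsubst_fexpr:
  assumes "finite V" "finite R"
    and "\<And>i. i \<in> V \<Longrightarrow> goodr g (a i) \<and> rsubst g (a i) \<noteq> 0"
    and "\<And>r. r \<in> R \<Longrightarrow> goodr g (b r) \<and> goodr g (c r) \<and> rsubst g (c r) \<noteq> 0"
  shows "rsubst g ((1 / (\<Prod>i\<in>V. a i)) * (\<Prod>r\<in>R. b r / c r)) =
         (1 / (\<Prod>i\<in>V. rsubst g (a i))) * (\<Prod>r\<in>R. rsubst g (b r) / rsubst g (c r))"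
proof -
  have pa: "goodr g (\<Prod>i\<in>V. a i) \<and> rsubst g (\<Prod>i\<in>V. a i) = (\<Prod>i\<in>V. rsubst g (a i))"
    using goodr_prod[OF assms(1)] assms(3) by blast
  have nz: "(\<Prod>i\<in>V. rsubst g (a i)) \<noteq> 0" using assms(1,3) by simp
  have q: "goodr g (1 / (\<Prod>i\<in>V. a i)) \<and> rsubst g (1 / (\<Prod>i\<in>V. a i)) = 1 / (\<Prod>i\<in>V. rsubst g (a i))"
    using goodr_divide[OF conjunct1[OF goodr_one] conjunct1[OF pa]] pa nz goodr_one by simp
  have bc: "\<And>r. r \<in> R \<Longrightarrow> goodr g (b r / c r) \<and> rsubst g (b r / c r) = rsubst g (b r) / rsubst g (c r)"
    using assms(4) goodr_divide by blast
  have pb: "goodr g (\<Prod>r\<in>R. b r / c r) \<and> rsubst g (\<Prod>r\<in>R. b r / c r) = (\<Prod>r\<in>R. rsubst g (b r) / rsubst g (c r))"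
    using goodr_prod[OF assms(2), of g "\<lambda>r. b r / c r"] bc by simp
  show ?thesis using goodr_mult[OF conjunct1[OF q] conjunct1[OF pb]] q pb by simp
qed

lemma usum_nonzero: assumes "finite T" "T \<noteq> {}" shows "usum T \<noteq> 0"
proof
  assume "usum T = 0"
  hence "rsubst (\<lambda>_. 1) (usum T) = 0" using goodr_zero by simp
  hence "(\<Sum>k\<in>T. (1::rfun)) = 0" using goodr_usum[OF assms(1), of "\<lambda>_. 1"] by simp
  hence "(of_nat (card T) :: rfun) = 0" by simp
  moreover have "card T \<noteq> 0" using assms by simp
  moreover have "(of_nat n :: rfun) \<noteq> 0" if "n \<noteq> 0" for n
  proof -
    have "(Poly_Mapping.single 0 (of_nat n) :: mpoly) \<noteq> 0" using that by simp
    hence "(of_nat n :: mpoly) \<noteq> 0" by (simp add: single_of_nat)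
    thus ?thesis by (simp add: of_nat_fract eq_fract Zero_fract_def)
  qed
  ultimately show False by blast
qed


inductive pth :: "shrub \<Rightarrow> nat set \<Rightarrow> nat \<Rightarrow> bool" for P S where
  base: "j \<notin> S \<Longrightarrow> ht P j = 0 \<Longrightarrow> pth P S j"
| step: "j \<notin> S \<Longrightarrow> covers P j i \<Longrightarrow> pth P S i \<Longrightarrow> pth P S j"

lemma pth_notin: "pth P S j \<Longrightarrow> j \<notin> S"
  by (induction rule: pth.induct) auto

lemma pth_list:
  "pth P S j \<Longrightarrow> \<exists>xs. xs \<noteq> [] \<and> hd xs = j \<and> (\<forall>t. Suc t < length xs \<longrightarrow> covers P (xs ! t) (xs ! Suc t))
      \<and> ht P (last xs) = 0 \<and> set xs \<inter> S = {}"
proof (induction rule: pth.induct)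
  case (base j)
  then show ?case by (intro exI[of _ "[j]"]) auto
next
  case (step j i)
  then obtain xs where xs: "xs \<noteq> []" "hd xs = i" "\<forall>t. Suc t < length xs \<longrightarrow> covers P (xs ! t) (xs ! Suc t)"
    "ht P (last xs) = 0" "set xs \<inter> S = {}" by blast
  have "\<forall>t. Suc t < length (j # xs) \<longrightarrow> covers P ((j # xs) ! t) ((j # xs) ! Suc t)"
  proof (intro allI impI)
    fix t assume "Suc t < length (j # xs)"
    then show "covers P ((j # xs) ! t) ((j # xs) ! Suc t)"
      using xs step.hyps(2) by (cases t) (auto simp: hd_conv_nth)
  qed
  then show ?case using xs step.hyps(1) by (intro exI[of _ "j # xs"]) auto
qed

lemma list_pth:
  "xs \<noteq> [] \<Longrightarrow> (\<forall>t. Suc t < length xs \<longrightarrow> covers P (xs ! t) (xs ! Suc t)) \<Longrightarrow>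
   ht P (last xs) = 0 \<Longrightarrow> set xs \<inter> S = {} \<Longrightarrow> pth P S (hd xs)"
proof (induction xs)
  case Nil
  then show ?case by simp
next
  case (Cons a xs)
  show ?case
  proof (cases xs)
    case Nil
    then show ?thesis using Cons.prems by (auto intro: pth.base)
  next
    case (Cons b ys)
    have c: "\<forall>t. Suc t < length xs \<longrightarrow> covers P (xs ! t) (xs ! Suc t)"
      using Cons.prems(2) by auto
    have "covers P a (hd xs)" using Cons.prems(2)[rule_format, of 0] Cons by simp
    moreover have "pth P S (hd xs)" using Cons.IH[OF _ c] Cons Cons.prems by auto
    ultimately show ?thesis using Cons.prems by (auto intro: pth.step)
  qed
qed

lemma gen_pth: "gen P S = {j \<in> verts P. \<not> pth P S j}"
proof -
  have "(\<exists>xs. desc_path P xs \<and> hd xs = j \<and> set xs \<inter> S = {}) \<longleftrightarrow> pth P S j" if "j \<in> verts P" for j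
  proof
    assume "\<exists>xs. desc_path P xs \<and> hd xs = j \<and> set xs \<inter> S = {}"
    then show "pth P S j" unfolding desc_path_def using list_pth by blast
  next
    assume "pth P S j"
    then show "\<exists>xs. desc_path P xs \<and> hd xs = j \<and> set xs \<inter> S = {}"
      using pth_list that unfolding desc_path_def by blast
  qed
  thus ?thesis unfolding gen_def by blast
qed

definition wf :: "shrub \<Rightarrow> bool" where
  "wf P \<longleftrightarrow> (\<forall>e\<in>edges P. \<exists>a b. a \<in> verts P \<and> b \<in> verts P \<and> a \<noteq> b \<and> e = {a, b})
     \<and> (\<forall>n. n \<notin> verts P \<longrightarrow> ht P n = 0)"

lemma shrub_wf: "is_shrub P \<Longrightarrow> wf P"
  unfolding is_shrub_def wf_def by blast

lemma edge_verts: "wf P \<Longrightarrow> {a, b} \<in> edges P \<Longrightarrow> a \<in> verts P \<and> b \<in> verts P \<and> a \<noteq> b"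
  unfolding wf_def by (metis doubleton_eq_iff insert_absorb2 insert_iff singleton_iff)

lemma covers_verts: "wf P \<Longrightarrow> covers P j i \<Longrightarrow> i \<in> verts P \<and> j \<in> verts P \<and> i \<noteq> j"
  unfolding covers_def using edge_verts by blast

lemma covers_ht: "covers P j i \<Longrightarrow> ht P j = Suc (ht P i)"
  unfolding covers_def by simp

lemma pth_mono: "pth P S j \<Longrightarrow> S' \<subseteq> S \<Longrightarrow> pth P S' j"
  by (induction rule: pth.induct) (auto intro: pth.intros)

lemma shrub_pth: assumes "is_shrub P" "j \<in> verts P" shows "pth P {} j"
proof -
  have "\<forall>j. ht P j = n \<longrightarrow> j \<in> verts P \<longrightarrow> pth P {} j" for n
  proof (induction n rule: less_induct)
    case (less n)
    show ?case
    proof (intro allI impI)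
      fix j assume j: "ht P j = n" "j \<in> verts P"
      show "pth P {} j"
      proof (cases "n = 0")
        case True then show ?thesis using j by (auto intro: pth.base)
      next
        case False
        have ax: "\<forall>j\<in>verts P. ht P j > 0 \<longrightarrow> (\<exists>i. covers P j i)" using assms(1) unfolding is_shrub_def by blast
        then obtain i where i: "covers P j i" using j False by auto
        have "i \<in> verts P" using covers_verts[OF shrub_wf[OF assms(1)] i] by simp
        moreover have "ht P i < n" using covers_ht[OF i] j by simp
        ultimately have "pth P {} i" using less by blast
        then show ?thesis using i by (auto intro: pth.step)
      qed
    qed
  qed
  thus ?thesis using assms by blast
qed

lemma pth_low: "pth P {} z \<Longrightarrow> z \<notin> S \<Longrightarrow> (\<forall>w\<in>S. ht P z \<le> ht P w) \<Longrightarrow> pth P S z"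
proof (induction rule: pth.induct)
  case (base j)
  then show ?case by (auto intro: pth.base)
next
  case (step j i)
  have "i \<notin> S" using step.prems covers_ht[OF step.hyps(2)] by force
  moreover have "\<forall>w\<in>S. ht P i \<le> ht P w" using step.prems covers_ht[OF step.hyps(2)] by force
  ultimately show ?case using step by (auto intro: pth.step)
qed

lemma pth_not_gen: "pth P S j \<Longrightarrow> j \<notin> gen P S"
  by (simp add: gen_pth)

lemma gen_subset: "gen P S \<subseteq> verts P"
  by (auto simp: gen_pth)

lemma gen_contains: "S \<inter> verts P \<subseteq> gen P S"
  by (auto simp: gen_pth dest: pth_notin)

lemma finite_gen: "finite (verts P) \<Longrightarrow> finite (gen P S)"
  using gen_subset finite_subset by blast

abbreviation rs where "rs \<equiv> restrict_shrub"

lemma rs_simps [simp]: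
  "verts (rs P X) = verts P \<inter> X"
  "edges (rs P X) = {e \<in> edges P. e \<subseteq> X}"
  "ht (rs P X) n = (if n \<in> verts P \<inter> X then ht P n else 0)"
  by (simp_all add: restrict_shrub_def)

lemma wf_rs: "wf P \<Longrightarrow> wf (rs P X)"
  unfolding wf_def
proof (simp, intro allI impI ballI)
  fix e assume a: "(\<forall>e\<in>edges P. \<exists>a. a \<in> verts P \<and> (\<exists>b. b \<in> verts P \<and> a \<noteq> b \<and> e = {a, b})) \<and> (\<forall>n. n \<notin> verts P \<longrightarrow> ht P n = 0)"
    and e: "e \<in> edges P \<and> e \<subseteq> X"
  then obtain a b where "a \<in> verts P" "b \<in> verts P" "a \<noteq> b" "e = {a, b}" by blast
  with e show "\<exists>a. a \<in> verts P \<and> a \<in> X \<and> (\<exists>b. b \<in> verts P \<and> b \<in> X \<and> a \<noteq> b \<and> e = {a, b})" by auto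
qed

lemma covers_rs: "wf P \<Longrightarrow> covers (rs P X) a b \<longleftrightarrow> covers P a b \<and> a \<in> X \<and> b \<in> X"
  unfolding covers_def using edge_verts[of P b a] by auto

lemma rs_rs: "rs (rs P X) Y = rs P (X \<inter> Y)"
  by (simp add: restrict_shrub_def) (auto simp: fun_eq_iff)

lemma rs_cong: "wf P \<Longrightarrow> verts P \<inter> X = verts P \<inter> Y \<Longrightarrow> rs P X = rs P Y"
  unfolding restrict_shrub_def wf_def by (auto simp: fun_eq_iff)

lemma pth_rs_back: "pth (rs P X) S j \<Longrightarrow> j \<in> verts P \<inter> X \<Longrightarrow> wf P \<Longrightarrow> pth P S j"
proof (induction rule: pth.induct)
  case (base j)
  then show ?case by (auto intro: pth.base)
next
  case (step j i)
  have "covers P j i" "i \<in> verts P \<inter> X" using covers_rs[OF step.prems(2)] step.hyps(2)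
      covers_verts[OF step.prems(2)] by auto
  then show ?case using step by (auto intro: pth.step)
qed

lemma pth_rs: "pth P S j \<Longrightarrow> wf P \<Longrightarrow> (\<forall>v. pth P S v \<longrightarrow> v \<in> verts P \<longrightarrow> v \<in> X) \<Longrightarrow> pth (rs P X) S j"
proof (induction rule: pth.induct)
  case (base j)
  then show ?case by (auto intro: pth.base)
next
  case (step j i)
  have "covers (rs P X) j i" using covers_rs[OF step.prems(1)] step covers_verts[OF step.prems(1) step.hyps(2)]
    by (auto intro: pth.step)
  then show ?case using step by (auto intro: pth.step)
qed

lemma gen_inter: "wf P \<Longrightarrow> gen P S = gen P (S \<inter> verts P)"
proof -
  assume w: "wf P"
  have "pth P S j \<longleftrightarrow> pth P (S \<inter> verts P) j" if "j \<in> verts P" for j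
  proof
    assume "pth P S j" thus "pth P (S \<inter> verts P) j" by (rule pth_mono) auto
  next
    assume "pth P (S \<inter> verts P) j"
    thus "pth P S j" using that
    proof (induction rule: pth.induct)
      case (base j) then show ?case by (auto intro: pth.base)
    next
      case (step j i) then show ?case using covers_verts[OF w step.hyps(2)] by (auto intro: pth.step)
    qed
  qed
  thus ?thesis by (auto simp: gen_pth)
qed


definition cls :: "shrub \<Rightarrow> nat \<Rightarrow> nat set" where
  "cls P w = {v. ramified P v \<and> below P v = below P w}"

lemma Ram_cls: "Ram P = cls P ` {w. ramified P w}"
  unfolding Ram_def cls_def by auto

lemma ramified_verts: "ramified P w \<Longrightarrow> w \<in> verts P"
  unfolding ramified_def by simp

lemma finite_Ram: "finite (verts P) \<Longrightarrow> finite (Ram P)"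
  unfolding Ram_cls using ramified_verts
  by (metis (mono_tags, lifting) finite_imageI mem_Collect_eq rev_finite_subset subsetI)

lemma rminus_cls: "ramified P w \<Longrightarrow> rminus P (cls P w) = below P w"
proof -
  assume w: "ramified P w"
  have "below P ` cls P w = {below P w}" using w unfolding cls_def by auto
  thus ?thesis unfolding rminus_def by simp
qed

lemma below_verts: "wf P \<Longrightarrow> below P w \<subseteq> verts P"
  unfolding below_def using covers_verts by blast

lemma ramified_below: "ramified P w \<Longrightarrow> \<exists>a b. a \<in> below P w \<and> b \<in> below P w \<and> a \<noteq> b"
  unfolding ramified_def below_def by auto

lemma num_nonempty:
  assumes "is_shrub Q" "ramified Q w"
  shows "below Q w \<inter> verts (rs Q (verts Q - gen Q (cls Q w))) \<noteq> {}"
proof -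
  obtain b where b: "b \<in> below Q w" using ramified_below[OF assms(2)] by blast
  have wq: "wf Q" using shrub_wf[OF assms(1)] .
  have bv: "b \<in> verts Q" using b below_verts[OF wq] by blast
  have cw: "covers Q w b" using b unfolding below_def by simp
  have "\<forall>v\<in>cls Q w. covers Q v b" using b unfolding cls_def below_def by auto
  hence "\<forall>v\<in>cls Q w. ht Q v = Suc (ht Q b)" using covers_ht by blast
  hence "pth Q (cls Q w) b"
    by (intro pth_low[OF shrub_pth[OF assms(1) bv]]) auto
  hence "b \<notin> gen Q (cls Q w)" by (rule pth_not_gen)
  thus ?thesis using b bv by auto
qed

subsection \<open>Substitution u_x := u_x + u_y\<close>

definition extxy :: "nat \<Rightarrow> nat \<Rightarrow> nat set \<Rightarrow> nat set" where
  "extxy x y T = (if x \<in> T then insert y T else T)"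

definition sb :: "nat \<Rightarrow> nat \<Rightarrow> nat \<Rightarrow> rfun" where
  "sb x y = (\<lambda>n. if n = x then usum {x, y} else u n)"

lemma usum_insert: "finite T \<Longrightarrow> y \<notin> T \<Longrightarrow> usum (insert y T) = u y + usum T"
  by (simp add: usum_def)

lemma rsubst_usum_ext:
  assumes "finite T" "y \<notin> T" "x \<noteq> y"
  shows "goodr (sb x y) (usum T) \<and> rsubst (sb x y) (usum T) = usum (extxy x y T)"
proof -
  have g: "goodr (sb x y) (usum T) \<and> rsubst (sb x y) (usum T) = (\<Sum>k\<in>T. sb x y k)"
    using goodr_usum[OF assms(1)] .
  have "(\<Sum>k\<in>T. sb x y k) = usum (extxy x y T)"
  proof (cases "x \<in> T")
    case True
    have "(\<Sum>k\<in>T. sb x y k) = sb x y x + (\<Sum>k\<in>T - {x}. sb x y k)"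
      using True assms(1) by (simp add: sum.remove)
    also have "(\<Sum>k\<in>T - {x}. sb x y k) = usum (T - {x})"
      unfolding usum_def sb_def by (rule sum.cong) auto
    also have "sb x y x = u x + u y" using assms(3) by (simp add: sb_def usum_def)
    also have "u x + u y + usum (T - {x}) = u y + usum T"
      using True assms(1) by (simp add: usum_def sum.remove)
    also have "\<dots> = usum (extxy x y T)"
      using True assms by (simp add: extxy_def usum_insert)
    finally show ?thesis .
  next
    case False
    then show ?thesis unfolding usum_def sb_def extxy_def by (auto intro: sum.cong)
  qed
  thus ?thesis using g by simp
qed

lemma extxy_nonempty: "T \<noteq> {} \<Longrightarrow> extxy x y T \<noteq> {}"
  by (simp add: extxy_def)

lemma extxy_finite: "finite T \<Longrightarrow> finite (extxy x y T)"
  by (simp add: extxy_def)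

lemma rsubst_f:
  assumes Q: "is_shrub Q" and y: "y \<notin> verts Q" and xy: "x \<noteq> y"
  shows "rsubst (sb x y) (f_shrub Q) =
     (1 / (\<Prod>i\<in>verts Q. usum (extxy x y (gen Q {i})))) *
     (\<Prod>r\<in>Ram Q. usum (extxy x y (gen (rs Q (verts Q - gen Q r)) (rminus Q r)))
                / usum (extxy x y (gen Q (rminus Q r))))"
proof -
  have wq: "wf Q" using shrub_wf[OF Q] .
  have fin: "finite (verts Q)" using Q unfolding is_shrub_def by simp
  have key: "goodr (sb x y) (usum T) \<and> rsubst (sb x y) (usum T) = usum (extxy x y T) \<and> usum (extxy x y T) \<noteq> 0"
    if "T \<subseteq> verts Q" "T \<noteq> {}" for T
  proof -
    have f: "finite T" using that fin finite_subset by blast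
    have yT: "y \<notin> T" using that y by blast
    have "usum (extxy x y T) \<noteq> 0" by (rule usum_nonzero[OF extxy_finite[OF f] extxy_nonempty[OF that(2)]])
    thus ?thesis using rsubst_usum_ext[OF f yT xy] by simp
  qed
  have A: "goodr (sb x y) (usum (gen Q {i})) \<and> rsubst (sb x y) (usum (gen Q {i})) \<noteq> 0 \<and>
           rsubst (sb x y) (usum (gen Q {i})) = usum (extxy x y (gen Q {i}))" if "i \<in> verts Q" for i
  proof -
    have "gen Q {i} \<subseteq> verts Q" by (rule gen_subset)
    moreover have "i \<in> gen Q {i}" using gen_contains[of "{i}" Q] that by blast
    ultimately have "gen Q {i} \<noteq> {}" by blast
    with key[OF \<open>gen Q {i} \<subseteq> verts Q\<close> this] show ?thesis by simp
  qed
  have B: "goodr (sb x y) (usum (gen (rs Q (verts Q - gen Q r)) (rminus Q r))) \<and>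
           goodr (sb x y) (usum (gen Q (rminus Q r))) \<and> rsubst (sb x y) (usum (gen Q (rminus Q r))) \<noteq> 0 \<and>
           rsubst (sb x y) (usum (gen (rs Q (verts Q - gen Q r)) (rminus Q r))) =
              usum (extxy x y (gen (rs Q (verts Q - gen Q r)) (rminus Q r))) \<and>
           rsubst (sb x y) (usum (gen Q (rminus Q r))) = usum (extxy x y (gen Q (rminus Q r)))"
    if rR: "r \<in> Ram Q" for r
  proof -
    obtain w where w: "ramified Q w" "r = cls Q w" using rR unfolding Ram_cls by blast
    have rm: "rminus Q r = below Q w" using rminus_cls[OF w(1)] w(2) by simp
    have bv: "below Q w \<subseteq> verts Q" using below_verts[OF wq] .
    have ne: "below Q w \<noteq> {}" using ramified_below[OF w(1)] by blast
    have s1: "gen Q (below Q w) \<subseteq> verts Q" "gen Q (below Q w) \<noteq> {}"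
      using gen_subset gen_contains[of "below Q w" Q] bv ne by auto
    have s2: "gen (rs Q (verts Q - gen Q r)) (below Q w) \<subseteq> verts Q"
      using gen_subset[of "rs Q (verts Q - gen Q r)"] by auto
    have s3: "gen (rs Q (verts Q - gen Q r)) (below Q w) \<noteq> {}"
      using gen_contains[of "below Q w" "rs Q (verts Q - gen Q r)"] num_nonempty[OF Q w(1)] w(2) by auto
    note k1 = key[OF s1] note k2 = key[OF s2 s3]
    show ?thesis unfolding rm using k1 k2 by simp
  qed
  have "rsubst (sb x y) (f_shrub Q) =
     (1 / (\<Prod>i\<in>verts Q. rsubst (sb x y) (usum (gen Q {i})))) *
     (\<Prod>r\<in>Ram Q. rsubst (sb x y) (usum (gen (rs Q (verts Q - gen Q r)) (rminus Q r)))
                / rsubst (sb x y) (usum (gen Q (rminus Q r))))"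
    unfolding f_shrub_def
  proof (rule rsubst_fexpr[OF fin finite_Ram[OF fin]])
    fix i assume "i \<in> verts Q" thus "goodr (sb x y) (usum (gen Q {i})) \<and> rsubst (sb x y) (usum (gen Q {i})) \<noteq> 0"
      using A by blast
  next
    fix r assume "r \<in> Ram Q" 
    thus "goodr (sb x y) (usum (gen (rs Q (verts Q - gen Q r)) (rminus Q r))) \<and>
           goodr (sb x y) (usum (gen Q (rminus Q r))) \<and> rsubst (sb x y) (usum (gen Q (rminus Q r))) \<noteq> 0"
      using B by blast
  qed
  also have "\<dots> = (1 / (\<Prod>i\<in>verts Q. usum (extxy x y (gen Q {i})))) *
     (\<Prod>r\<in>Ram Q. usum (extxy x y (gen (rs Q (verts Q - gen Q r)) (rminus Q r)))
                / usum (extxy x y (gen Q (rminus Q r))))"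
  proof -
    have "(\<Prod>i\<in>verts Q. rsubst (sb x y) (usum (gen Q {i}))) = (\<Prod>i\<in>verts Q. usum (extxy x y (gen Q {i})))"
      by (rule prod.cong) (use A in simp_all)
    moreover have "(\<Prod>r\<in>Ram Q. rsubst (sb x y) (usum (gen (rs Q (verts Q - gen Q r)) (rminus Q r)))
                / rsubst (sb x y) (usum (gen Q (rminus Q r)))) = (\<Prod>r\<in>Ram Q. usum (extxy x y (gen (rs Q (verts Q - gen Q r)) (rminus Q r)))
                / usum (extxy x y (gen Q (rminus Q r))))"
      by (rule prod.cong) (use B in simp_all)
    ultimately show ?thesis by simp
  qed
  finally show ?thesis .
qed


definition leaf :: "shrub \<Rightarrow> nat \<Rightarrow> nat \<Rightarrow> bool" where
  "leaf P x y \<longleftrightarrow> x \<in> verts P \<and> y \<in> verts P \<and> x \<noteq> y \<and> {x, y} \<in> edges P \<and>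
     ht P y = Suc (ht P x) \<and> (\<forall>e\<in>edges P. y \<in> e \<longrightarrow> e = {x, y})"

definition del :: "shrub \<Rightarrow> nat \<Rightarrow> shrub" where
  "del P y = rs P (verts P - {y})"

lemma leaf_no_cover: assumes "leaf P x y" shows "\<not> covers P a y"
proof
  assume c: "covers P a y"
  hence e: "{y, a} \<in> edges P" and h: "ht P a = Suc (ht P y)" unfolding covers_def by auto
  have "\<forall>e\<in>edges P. y \<in> e \<longrightarrow> e = {x, y}" using assms unfolding leaf_def by simp
  hence "{y, a} = {x, y}" using e by simp
  hence "a \<in> {x, y}" "x \<in> {y, a}" by blast+
  hence "a = x \<or> (a = y \<and> x = y)" by blast
  moreover have "x \<noteq> y" "ht P y = Suc (ht P x)" using assms unfolding leaf_def by auto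
  ultimately show False using h by auto
qed

lemma leaf_cover_from: assumes "leaf P x y" shows "covers P y i \<longleftrightarrow> i = x"
proof
  assume c: "covers P y i"
  hence e: "{i, y} \<in> edges P" unfolding covers_def by auto
  have "\<forall>e\<in>edges P. y \<in> e \<longrightarrow> e = {x, y}" using assms unfolding leaf_def by simp
  hence "{i, y} = {x, y}" using e by simp
  hence "i \<in> {x, y}" "x \<in> {i, y}" by blast+
  moreover have "x \<noteq> y" using assms unfolding leaf_def by auto
  ultimately show "i = x" by blast
next
  assume "i = x"
  thus "covers P y i" using assms unfolding leaf_def covers_def by auto
qed

lemma leaf_pth_avoid: "pth P S j \<Longrightarrow> leaf P x y \<Longrightarrow> j \<noteq> y \<Longrightarrow> pth P (insert y S) j"
proof (induction rule: pth.induct)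
  case (base j) then show ?case by (auto intro: pth.base)
next
  case (step j i)
  have "i \<noteq> y" using leaf_no_cover[OF step.prems(1)] step.hyps(2) by blast
  then show ?case using step by (auto intro: pth.step)
qed

lemma pth_leaf1: "pth P S j \<Longrightarrow> wf P \<Longrightarrow> leaf P x y \<Longrightarrow> j \<noteq> y \<Longrightarrow> pth (del P y) S j"
proof (induction rule: pth.induct)
  case (base j) then show ?case by (auto intro: pth.base simp: del_def)
next
  case (step j i)
  have "i \<noteq> y" using leaf_no_cover[OF step.prems(2)] step.hyps(2) by blast
  moreover have "covers (del P y) j i"
    unfolding del_def using covers_rs[OF step.prems(1)] step covers_verts[OF step.prems(1) step.hyps(2)] \<open>i \<noteq> y\<close>
    by auto
  ultimately show ?case using step by (auto intro: pth.step)
qed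

lemma pth_leaf: "wf P \<Longrightarrow> leaf P x y \<Longrightarrow> j \<in> verts P \<Longrightarrow> j \<noteq> y \<Longrightarrow> pth P S j \<longleftrightarrow> pth (del P y) S j"
  using pth_leaf1[of P S j x y] pth_rs_back[of P "verts P - {y}" S j] unfolding del_def by auto

lemma pth_leaf_y: assumes "leaf P x y" shows "pth P S y \<longleftrightarrow> y \<notin> S \<and> pth P S x"
proof
  assume "pth P S y"
  thus "y \<notin> S \<and> pth P S x"
  proof (cases rule: pth.cases)
    case base then show ?thesis using assms unfolding leaf_def by simp
  next
    case (step i) then show ?thesis using leaf_cover_from[OF assms] by simp
  qed
next
  assume "y \<notin> S \<and> pth P S x"
  thus "pth P S y" using leaf_cover_from[OF assms] by (auto intro: pth.step)
qed

lemma gen_leaf: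
  assumes w: "wf P" and l: "leaf P x y" and yS: "y \<notin> S"
  shows "gen P S = extxy x y (gen (del P y) S)"
proof -
  have xv: "x \<in> verts P" "x \<noteq> y" "y \<in> verts P" using l unfolding leaf_def by auto
  have "j \<in> gen P S \<longleftrightarrow> j \<in> extxy x y (gen (del P y) S)" for j
  proof (cases "j = y")
    case True
    have "y \<notin> gen (del P y) S" using gen_subset[of "del P y"] by (auto simp: del_def)
    moreover have "x \<in> gen (del P y) S \<longleftrightarrow> \<not> pth P S x"
      using pth_leaf[OF w l xv(1) xv(2)] xv by (auto simp: gen_pth del_def)
    ultimately show ?thesis using True pth_leaf_y[OF l] yS xv by (auto simp: gen_pth extxy_def)
  next
    case False
    have "j \<in> gen P S \<longleftrightarrow> j \<in> gen (del P y) S"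
      using pth_leaf[OF w l _ False] False by (auto simp: gen_pth del_def)
    thus ?thesis using False by (auto simp: extxy_def)
  qed
  thus ?thesis by blast
qed

lemma below_leaf: assumes w: "wf P" and l: "leaf P x y" and v: "v \<noteq> y"
  shows "below (del P y) v = below P v"
proof -
  have "covers (del P y) v i \<longleftrightarrow> covers P v i" for i
  proof
    assume "covers (del P y) v i" thus "covers P v i" unfolding del_def using covers_rs[OF w] by blast
  next
    assume c: "covers P v i"
    have "i \<noteq> y" using leaf_no_cover[OF l] c by blast
    moreover have "i \<in> verts P" "v \<in> verts P" using covers_verts[OF w c] by auto
    ultimately show "covers (del P y) v i" unfolding del_def using covers_rs[OF w] c v by blast
  qed
  thus ?thesis unfolding below_def by blast
qed

lemma ramified_leaf: assumes w: "wf P" and l: "leaf P x y" and v: "v \<noteq> y"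
  shows "ramified (del P y) v \<longleftrightarrow> ramified P v"
proof -
  have "covers (del P y) v a \<longleftrightarrow> covers P v a" for a
    using below_leaf[OF w l v] unfolding below_def by blast
  thus ?thesis unfolding ramified_def del_def using v by auto
qed

lemma not_ramified_leaf: assumes l: "leaf P x y" shows "\<not> ramified P y"
  by (auto simp: ramified_def leaf_cover_from[OF l])

lemma ramified_ne: "leaf P x y \<Longrightarrow> ramified P v \<Longrightarrow> v \<noteq> y"
  using not_ramified_leaf by blast

lemma cls_leaf: assumes w: "wf P" and l: "leaf P x y" and rw: "ramified P w"
  shows "cls (del P y) w = cls P w"
proof -
  have wy: "w \<noteq> y" using ramified_ne[OF l rw] .
  have "v \<in> cls (del P y) w \<longleftrightarrow> v \<in> cls P w" for v
  proof (cases "v = y")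
    case True
    have "\<not> ramified (del P y) y" unfolding ramified_def del_def by simp
    then show ?thesis using True not_ramified_leaf[OF l] unfolding cls_def by simp
  next
    case False
    then show ?thesis unfolding cls_def using ramified_leaf[OF w l] below_leaf[OF w l] wy by simp
  qed
  thus ?thesis by blast
qed

lemma Ram_leaf: assumes w: "wf P" and l: "leaf P x y" shows "Ram (del P y) = Ram P"
proof -
  have r: "{w. ramified (del P y) w} = {w. ramified P w}"
  proof -
    have "\<not> ramified (del P y) y" unfolding ramified_def del_def by simp
    show ?thesis
    proof (rule set_eqI)
      fix v show "v \<in> {w. ramified (del P y) w} \<longleftrightarrow> v \<in> {w. ramified P w}"
        by (cases "v = y") (use \<open>\<not> ramified (del P y) y\<close> ramified_leaf[OF w l] not_ramified_leaf[OF l] in auto)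
    qed
  qed
  show ?thesis unfolding Ram_cls r using cls_leaf[OF w l] by (auto intro: image_cong)
qed

lemma rminus_leaf: assumes w: "wf P" and l: "leaf P x y" and r: "r \<in> Ram P"
  shows "rminus (del P y) r = rminus P r \<and> y \<notin> rminus P r \<and> y \<notin> r"
proof -
  obtain w' where w': "ramified P w'" "r = cls P w'" using r unfolding Ram_cls by blast
  have wy: "w' \<noteq> y" using ramified_ne[OF l w'(1)] .
  have rd: "ramified (del P y) w'" using ramified_leaf[OF w l wy] w' by simp
  have "rminus (del P y) r = below P w'"
    using rminus_cls[OF rd] cls_leaf[OF w l w'(1)] below_leaf[OF w l wy] w' by simp
  moreover have "rminus P r = below P w'" using rminus_cls[OF w'(1)] w' by simp
  moreover have "y \<notin> below P w'" using leaf_no_cover[OF l] unfolding below_def by blast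
  moreover have "y \<notin> r" using w' not_ramified_leaf[OF l] unfolding cls_def by blast
  ultimately show ?thesis by simp
qed

lemma leaf_rs: "leaf P x y \<Longrightarrow> x \<in> X \<Longrightarrow> y \<in> X \<Longrightarrow> leaf (rs P X) x y"
  unfolding leaf_def by auto

lemma extxy_id: "x \<notin> T \<Longrightarrow> extxy x y T = T"
  by (simp add: extxy_def)

lemma f_leaf:
  assumes P: "is_shrub P" and l: "leaf P x y" and P': "is_shrub (del P y)"
  shows "f_shrub P = (1 / u y) * rsubst (sb x y) (f_shrub (del P y))"
proof -
  define P' where "P' = del P y"
  have w: "wf P" using shrub_wf[OF P] .
  have fin: "finite (verts P)" using P unfolding is_shrub_def by simp
  have xv: "x \<in> verts P" "x \<noteq> y" "y \<in> verts P" using l unfolding leaf_def by auto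
  have V': "verts P' = verts P - {y}" unfolding P'_def del_def by auto
  have gy: "gen P {y} = {y}"
  proof -
    have "j \<notin> gen P {y}" if "j \<in> verts P" "j \<noteq> y" for j
      using leaf_pth_avoid[OF shrub_pth[OF P that(1)] l that(2)] pth_not_gen by simp
    moreover have "y \<in> gen P {y}" using gen_contains[of "{y}" P] xv by blast
    ultimately show ?thesis using gen_subset[of P "{y}"] by blast
  qed
  have prod1: "(\<Prod>i\<in>verts P. usum (gen P {i})) = u y * (\<Prod>i\<in>verts P'. usum (extxy x y (gen P' {i})))"
  proof -
    have "(\<Prod>i\<in>verts P. usum (gen P {i})) = usum (gen P {y}) * (\<Prod>i\<in>verts P - {y}. usum (gen P {i}))"
      by (rule prod.remove[OF fin xv(3)])
    also have "usum (gen P {y}) = u y" using gy by (simp add: usum_def)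
    also have "(\<Prod>i\<in>verts P - {y}. usum (gen P {i})) = (\<Prod>i\<in>verts P'. usum (extxy x y (gen P' {i})))"
      unfolding V' by (rule prod.cong) (use gen_leaf[OF w l] P'_def in auto)
    finally show ?thesis .
  qed
  have termr: "usum (gen (rs P (verts P - gen P r)) (rminus P r)) / usum (gen P (rminus P r)) =
     usum (extxy x y (gen (rs P' (verts P' - gen P' r)) (rminus P' r))) / usum (extxy x y (gen P' (rminus P' r)))"
    if r: "r \<in> Ram P" for r
  proof -
    have rm: "rminus P' r = rminus P r" "y \<notin> rminus P r" "y \<notin> r"
      using rminus_leaf[OF w l r] P'_def by auto
    have den: "gen P (rminus P r) = extxy x y (gen P' (rminus P' r))"
      using gen_leaf[OF w l rm(2)] rm(1) P'_def by simp
    define G' where "G' = gen P' r"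
    have gr: "gen P r = extxy x y G'" using gen_leaf[OF w l rm(3)] P'_def G'_def by simp
    have G'V: "G' \<subseteq> verts P'" unfolding G'_def by (rule gen_subset)
    have num: "gen (rs P (verts P - gen P r)) (rminus P r) = extxy x y (gen (rs P' (verts P' - G')) (rminus P' r))"
    proof (cases "x \<in> G'")
      case True
      have "rs P (verts P - gen P r) = rs P' (verts P' - G')"
        unfolding P'_def del_def rs_rs
        by (rule rs_cong[OF w]) (use gr True V' G'V in \<open>auto simp: extxy_def P'_def del_def\<close>)
      moreover have "x \<notin> gen (rs P' (verts P' - G')) (rminus P' r)"
        using gen_subset[of "rs P' (verts P' - G')"] True by auto
      ultimately show ?thesis using rm(1) by (simp add: extxy_id)
    next
      case False
      have gr': "gen P r = G'" using gr False by (simp add: extxy_id)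
      define R where "R = rs P (verts P - G')"
      have lR: "leaf R x y" unfolding R_def
        by (rule leaf_rs[OF l]) (use False xv G'V V' in auto)
      have dR: "del R y = rs P' (verts P' - G')"
        unfolding R_def P'_def del_def rs_rs
        by (rule rs_cong[OF w]) (use V' G'V in \<open>auto simp: P'_def del_def\<close>)
      have wR: "wf R" unfolding R_def by (rule wf_rs[OF w])
      show ?thesis using gen_leaf[OF wR lR rm(2)] dR rm(1) gr' R_def by simp
    qed
    show ?thesis using num den G'_def by simp
  qed
  have prod2: "(\<Prod>r\<in>Ram P. usum (gen (rs P (verts P - gen P r)) (rminus P r)) / usum (gen P (rminus P r))) =
     (\<Prod>r\<in>Ram P'. usum (extxy x y (gen (rs P' (verts P' - gen P' r)) (rminus P' r))) / usum (extxy x y (gen P' (rminus P' r))))"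
    using Ram_leaf[OF w l] P'_def termr by (auto intro: prod.cong)
  have "f_shrub P = (1 / u y) * ((1 / (\<Prod>i\<in>verts P'. usum (extxy x y (gen P' {i})))) *
     (\<Prod>r\<in>Ram P'. usum (extxy x y (gen (rs P' (verts P' - gen P' r)) (rminus P' r))) / usum (extxy x y (gen P' (rminus P' r)))))"
    unfolding f_shrub_def prod1 prod2 by simp
  also have "\<dots> = (1 / u y) * rsubst (sb x y) (f_shrub P')"
    using rsubst_f[of P' y x] P' P'_def V' xv by simp
  finally show ?thesis using P'_def by simp
qed


definition twin :: "shrub \<Rightarrow> nat \<Rightarrow> nat \<Rightarrow> bool" where
  "twin P x y \<longleftrightarrow> x \<in> verts P \<and> y \<in> verts P \<and> x \<noteq> y \<and> ht P x = ht P y \<and> {x, y} \<notin> edges P \<and>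
     (\<forall>v. v \<noteq> x \<longrightarrow> v \<noteq> y \<longrightarrow> ({v, x} \<in> edges P \<longleftrightarrow> {v, y} \<in> edges P))"

definition phi :: "nat \<Rightarrow> nat \<Rightarrow> nat \<Rightarrow> nat" where
  "phi x y v = (if v = y then x else v)"

lemma twin_sym: "twin P x y \<Longrightarrow> twin P y x"
  unfolding twin_def by (auto simp: insert_commute)

lemma tw_cov_down: assumes t: "twin P x y" and v: "v \<noteq> x" "v \<noteq> y"
  shows "covers P v x \<longleftrightarrow> covers P v y"
proof -
  have "{x, v} \<in> edges P \<longleftrightarrow> {y, v} \<in> edges P"
    using t v unfolding twin_def by (simp add: insert_commute)
  thus ?thesis using t unfolding covers_def twin_def by simp
qed

lemma tw_cov_up: assumes t: "twin P x y" and v: "v \<noteq> x" "v \<noteq> y"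
  shows "covers P x v \<longleftrightarrow> covers P y v"
proof -
  have "{v, x} \<in> edges P \<longleftrightarrow> {v, y} \<in> edges P"
    using t v unfolding twin_def by simp
  thus ?thesis using t unfolding covers_def twin_def by simp
qed

lemma tw_ht: "twin P x y \<Longrightarrow> ht P x = ht P y"
  unfolding twin_def by simp

lemma tw_facts: "twin P x y \<Longrightarrow> x \<in> verts P \<and> y \<in> verts P \<and> x \<noteq> y"
  unfolding twin_def by simp

lemma pth_twin1: "pth P S j \<Longrightarrow> wf P \<Longrightarrow> twin P x y \<Longrightarrow> (x \<in> S \<longleftrightarrow> y \<in> S) \<Longrightarrow> j \<in> verts P \<Longrightarrow> pth (del P y) S (phi x y j)"
proof (induction rule: pth.induct)
  case (base j)
  have "phi x y j \<in> verts P - {y}" using base tw_facts[of P x y] by (auto simp: phi_def)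
  moreover have "ht P (phi x y j) = 0" using base tw_ht[OF base.prems(2)] by (auto simp: phi_def)
  moreover have "phi x y j \<notin> S" using base by (auto simp: phi_def)
  ultimately show ?case by (auto intro: pth.base simp: del_def)
next
  case (step j i)
  have w: "wf P" and t: "twin P x y" using step by auto
  have iv: "i \<in> verts P" using covers_verts[OF w step.hyps(2)] by simp
  have hi: "ht P j = Suc (ht P i)" using covers_ht[OF step.hyps(2)] .
  have hxy: "ht P x = ht P y" using tw_ht[OF t] .
  have c: "covers P (phi x y j) (phi x y i)"
  proof (cases "i = y")
    case True
    have "j \<noteq> x" "j \<noteq> y" using hi hxy True by auto
    thus ?thesis using tw_cov_down[OF t] step.hyps(2) True by (simp add: phi_def)
  next
    case False
    show ?thesis
    proof (cases "j = y")
      case True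
      have "i \<noteq> x" using hi hxy True by auto
      thus ?thesis using tw_cov_up[OF t] step.hyps(2) True False by (simp add: phi_def)
    next
      case False
      thus ?thesis using step.hyps(2) \<open>i \<noteq> y\<close> by (simp add: phi_def)
    qed
  qed
  have "phi x y j \<noteq> y" "phi x y i \<noteq> y" using tw_facts[OF t] unfolding phi_def by auto
  moreover have "phi x y j \<in> verts P" "phi x y i \<in> verts P" using covers_verts[OF w c] by auto
  ultimately have "covers (del P y) (phi x y j) (phi x y i)"
    unfolding del_def using covers_rs[OF w] c by auto
  moreover have "phi x y j \<notin> S" using step.hyps(1) step.prems(3) by (auto simp: phi_def)
  ultimately show ?case using step.IH[OF w t step.prems(3) iv] by (auto intro: pth.step)
qed

lemma pth_twin2: "pth (del P y) S k \<Longrightarrow> wf P \<Longrightarrow> twin P x y \<Longrightarrow> (x \<in> S \<longleftrightarrow> y \<in> S) \<Longrightarrow>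
   j \<in> verts P \<Longrightarrow> phi x y j = k \<Longrightarrow> pth P S j"
proof (induction arbitrary: j rule: pth.induct)
  case (base k)
  have kv: "k \<in> verts P" "k \<noteq> y" using base tw_facts[of P x y] by (auto simp: phi_def split: if_splits)
  have "ht P k = 0" using base kv by (simp add: del_def)
  hence "ht P j = 0" using base tw_ht[OF base(4)] by (auto simp: phi_def split: if_splits)
  moreover have "j \<notin> S" using base by (auto simp: phi_def split: if_splits)
  ultimately show ?case by (auto intro: pth.base)
next
  case (step k i)
  have w: "wf P" and t: "twin P x y" using step by auto
  have c: "covers P k i" "i \<noteq> y" "k \<noteq> y" "i \<in> verts P"
    using step.hyps(2) covers_rs[OF w] covers_verts[OF w] unfolding del_def by auto
  have pi: "pth P S i" using step.IH[OF w t step.prems(3) c(4)] c(2) by (simp add: phi_def)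
  have cj: "covers P j i"
  proof (cases "j = y")
    case True
    hence "k = x" using step.prems by (simp add: phi_def)
    moreover have "i \<noteq> x" using c(1) \<open>k = x\<close> covers_verts[OF w c(1)] by auto
    ultimately show ?thesis using tw_cov_up[OF t] c True by simp
  next
    case False thus ?thesis using step.prems c by (simp add: phi_def)
  qed
  have "j \<notin> S" using step.hyps(1) step.prems by (auto simp: phi_def split: if_splits)
  thus ?case using cj pi by (auto intro: pth.step)
qed

lemma pth_twin: "wf P \<Longrightarrow> twin P x y \<Longrightarrow> (x \<in> S \<longleftrightarrow> y \<in> S) \<Longrightarrow> j \<in> verts P \<Longrightarrow>
   pth P S j \<longleftrightarrow> pth (del P y) S (phi x y j)"
  using pth_twin1 pth_twin2 by blast

lemma gen_twin:
  assumes w: "wf P" and t: "twin P x y" and S: "x \<in> S \<longleftrightarrow> y \<in> S"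
  shows "gen P S = extxy x y (gen (del P y) S)"
proof -
  have xv: "x \<in> verts P" "y \<in> verts P" "x \<noteq> y" using tw_facts[OF t] by auto
  have "j \<in> gen P S \<longleftrightarrow> j \<in> extxy x y (gen (del P y) S)" for j
  proof -
    have yn: "y \<notin> gen (del P y) S" using gen_subset[of "del P y" S] by (auto simp: del_def)
    have "j \<in> gen P S \<longleftrightarrow> j \<in> verts P \<and> phi x y j \<in> gen (del P y) S"
      using pth_twin[OF w t S] xv by (auto simp: gen_pth del_def phi_def)
    also have "\<dots> \<longleftrightarrow> j \<in> extxy x y (gen (del P y) S)"
      using yn xv gen_subset[of "del P y" S] by (auto simp: extxy_def phi_def del_def)
    finally show ?thesis .
  qed
  thus ?thesis by blast
qed

lemma gen_twin_single:
  assumes P: "is_shrub P" and t: "twin P x y"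
  shows "gen P {x} = {x}"
proof -
  have w: "wf P" using shrub_wf[OF P] .
  have xv: "x \<in> verts P" "y \<in> verts P" "x \<noteq> y" using tw_facts[OF t] by auto
  have py: "pth P {x} y" using pth_low[OF shrub_pth[OF P xv(2)]] xv tw_ht[OF t] by simp
  have "pth P {x} j" if "pth P {} j" "j \<noteq> x" for j
    using that
  proof (induction rule: pth.induct)
    case (base j) then show ?case by (auto intro: pth.base)
  next
    case (step j i)
    show ?case
    proof (cases "i = x")
      case True
      have hj: "ht P j = Suc (ht P x)" using covers_ht[OF step.hyps(2)] True by simp
      hence "j \<noteq> y" using tw_ht[OF t] by auto
      hence "covers P j y" using tw_cov_down[OF t step.prems] step.hyps(2) True by simp
      thus ?thesis using py step.prems by (auto intro: pth.step)
    next
      case False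
      thus ?thesis using step by (auto intro: pth.step)
    qed
  qed
  hence "j \<notin> gen P {x}" if "j \<in> verts P" "j \<noteq> x" for j
    using that shrub_pth[OF P] pth_not_gen by blast
  moreover have "x \<in> gen P {x}" using gen_contains[of "{x}" P] xv by blast
  ultimately show ?thesis using gen_subset[of P "{x}"] by blast
qed

definition Aset :: "shrub \<Rightarrow> nat \<Rightarrow> nat \<Rightarrow> nat set" where
  "Aset P x y = {v \<in> verts P. below P v = {x, y}}"

lemma twin_avoid:
  assumes P: "is_shrub P" and t: "twin P x y"
  shows "pth P (Aset P x y) j \<Longrightarrow> j \<notin> {x, y} \<Longrightarrow> pth P (Aset P x y \<union> {x, y}) j"
proof (induction rule: pth.induct)
  case (base j) then show ?case by (auto intro: pth.base)
next
  case (step j i)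
  have w: "wf P" using shrub_wf[OF P] .
  show ?case
  proof (cases "i \<in> {x, y}")
    case False
    thus ?thesis using step by (auto intro: pth.step)
  next
    case True
    have hj: "ht P j = Suc (ht P x)" using covers_ht[OF step.hyps(2)] True tw_ht[OF t] by auto
    hence jxy: "j \<noteq> x" "j \<noteq> y" using tw_ht[OF t] by auto
    have cx: "covers P j x" "covers P j y" using tw_cov_down[OF t jxy] step.hyps(2) True by auto
    have jv: "j \<in> verts P" using covers_verts[OF w step.hyps(2)] by simp
    have "below P j \<noteq> {x, y}" using step.hyps(1) jv unfolding Aset_def by auto
    moreover have "{x, y} \<subseteq> below P j" using cx unfolding below_def by auto
    ultimately obtain z where z: "covers P j z" "z \<notin> {x, y}" unfolding below_def by blast
    have zv: "z \<in> verts P" using covers_verts[OF w z(1)] by simp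
    have hz: "ht P z = ht P x" using covers_ht[OF z(1)] hj by simp
    have hA: "\<forall>v\<in>Aset P x y. ht P v = Suc (ht P x)"
    proof
      fix v assume "v \<in> Aset P x y"
      hence "x \<in> below P v" unfolding Aset_def by auto
      thus "ht P v = Suc (ht P x)" unfolding below_def using covers_ht by auto
    qed
    have "z \<notin> Aset P x y" using hA hz by auto
    moreover have "\<forall>w\<in>Aset P x y \<union> {x, y}. ht P z \<le> ht P w" using hA hz tw_ht[OF t] by auto
    ultimately have "pth P (Aset P x y \<union> {x, y}) z"
      using pth_low[OF shrub_pth[OF P zv]] z(2) by auto
    thus ?thesis using z(1) step.hyps(1) jxy by (auto intro: pth.step)
  qed
qed


lemma ramified_alt: "ramified Q v \<longleftrightarrow> v \<in> verts Q \<and> (\<exists>a\<in>below Q v. \<exists>b\<in>below Q v. a \<noteq> b)"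
  unfolding ramified_def below_def by auto

lemma extxy_sym: "y \<notin> B \<Longrightarrow> x \<noteq> y \<Longrightarrow> (x \<in> extxy x y B \<longleftrightarrow> y \<in> extxy x y B)"
  by (auto simp: extxy_def)

lemma extxy_inj: "y \<notin> B1 \<Longrightarrow> y \<notin> B2 \<Longrightarrow> extxy x y B1 = extxy x y B2 \<Longrightarrow> B1 = B2"
  unfolding extxy_def by (auto split: if_splits)

context
  fixes P x y
  assumes w: "wf P" and t: "twin P x y"
begin

lemma xv: "x \<in> verts P" "y \<in> verts P" "x \<noteq> y"
  using tw_facts[OF t] by auto

lemma cov_del: "covers (del P y) a b \<longleftrightarrow> covers P a b \<and> a \<noteq> y \<and> b \<noteq> y"
  unfolding del_def using covers_rs[OF w] covers_verts[OF w] by auto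

lemma not_cov_xy: "\<not> covers P x y" "\<not> covers P y x" "\<not> covers P x x" "\<not> covers P y y"
  using covers_ht[of P x y] covers_ht[of P y x] covers_ht[of P x x] covers_ht[of P y y] tw_ht[OF t] by auto

lemma below_del_y: "y \<notin> below (del P y) v"
  unfolding below_def using cov_del by auto

lemma below_tw: assumes v: "v \<noteq> y" shows "below P v = extxy x y (below (del P y) v)"
proof -
  have b': "below (del P y) v = {i. covers P v i \<and> i \<noteq> y}" unfolding below_def using cov_del v by auto
  have cy: "covers P v y \<longleftrightarrow> covers P v x"
  proof (cases "v = x")
    case True thus ?thesis using not_cov_xy by simp
  next
    case False thus ?thesis using tw_cov_down[OF t False v] by simp
  qed
  show ?thesis
  proof (rule set_eqI)
    fix i show "i \<in> below P v \<longleftrightarrow> i \<in> extxy x y (below (del P y) v)"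
      unfolding b' extxy_def using cy xv(3) by (auto simp: below_def)
  qed
qed

lemma below_tw_x: "below P x = below (del P y) x"
  using below_tw[OF xv(3)] not_cov_xy(3) below_del_y unfolding extxy_def below_def
  by (auto split: if_splits)

lemma below_tw_y: "below P y = below (del P y) x"
proof -
  have "covers P y i \<longleftrightarrow> covers P x i" for i
  proof (cases "i = x \<or> i = y")
    case True thus ?thesis using not_cov_xy by auto
  next
    case False thus ?thesis using tw_cov_up[OF t] by auto
  qed
  thus ?thesis using below_tw_x unfolding below_def by auto
qed

lemma below_del_verts: "below (del P y) v \<subseteq> verts P - {y}"
  using below_verts[OF wf_rs[OF w], of "verts P - {y}" v] unfolding del_def by auto

lemma ramified_tw: assumes v: "v \<noteq> y"
  shows "ramified P v \<longleftrightarrow> ramified (del P y) v \<or> (v \<in> verts P \<and> x \<in> below (del P y) v)"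
proof -
  define B where "B = below (del P y) v"
  have yB: "y \<notin> B" unfolding B_def using below_del_y by simp
  have vv: "v \<in> verts (del P y) \<longleftrightarrow> v \<in> verts P" using v by (simp add: del_def)
  have "(\<exists>a\<in>extxy x y B. \<exists>b\<in>extxy x y B. a \<noteq> b) \<longleftrightarrow> (\<exists>a\<in>B. \<exists>b\<in>B. a \<noteq> b) \<or> x \<in> B"
    using yB xv(3) unfolding extxy_def by auto
  thus ?thesis unfolding ramified_alt below_tw[OF v] B_def[symmetric] using vv by blast
qed

lemma ramified_tw_y: "ramified P y \<longleftrightarrow> ramified (del P y) x"
  unfolding ramified_alt below_tw_y using xv by (auto simp: del_def)

lemma ramified_tw_x: "ramified P x \<longleftrightarrow> ramified (del P y) x"
  unfolding ramified_alt below_tw_x using xv by (auto simp: del_def)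

lemma ramified_del_ne: "ramified (del P y) v \<Longrightarrow> v \<noteq> y \<and> v \<in> verts P"
  unfolding ramified_def del_def by auto

lemma cls_tw: assumes r: "ramified (del P y) w"
  shows "cls P w = extxy x y (cls (del P y) w)"
proof -
  have wy: "w \<noteq> y" "w \<in> verts P" using ramified_del_ne[OF r] by auto
  have bw: "below P w = extxy x y (below (del P y) w)" using below_tw[OF wy(1)] .
  have yc: "y \<notin> cls (del P y) w" unfolding cls_def using ramified_del_ne by blast
  have "v \<in> cls P w \<longleftrightarrow> v \<in> extxy x y (cls (del P y) w)" for v
  proof (cases "v = y")
    case True
    have xn: "x \<notin> below (del P y) x" unfolding below_def using cov_del not_cov_xy(3) by simp
    have e1: "below P y = extxy x y (below (del P y) x)" using below_tw_y xn by (simp add: extxy_id)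
    have "below P y = below P w \<longleftrightarrow> below (del P y) x = below (del P y) w"
    proof
      assume "below P y = below P w"
      thus "below (del P y) x = below (del P y) w" using e1 bw extxy_inj[OF below_del_y below_del_y] by metis
    next
      assume "below (del P y) x = below (del P y) w" thus "below P y = below P w" using e1 bw by simp
    qed
    hence "y \<in> cls P w \<longleftrightarrow> ramified (del P y) x \<and> below (del P y) x = below (del P y) w"
      unfolding cls_def using ramified_tw_y by simp
    also have "\<dots> \<longleftrightarrow> x \<in> cls (del P y) w" unfolding cls_def by simp
    finally show ?thesis using True yc xv(3) by (auto simp: extxy_def)
  next
    case False
    have "below P v = below P w \<longleftrightarrow> below (del P y) v = below (del P y) w"
    proof
      assume "below P v = below P w"
      thus "below (del P y) v = below (del P y) w" using below_tw[OF False] bw extxy_inj[OF below_del_y below_del_y] by metis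
    next
      assume "below (del P y) v = below (del P y) w" thus "below P v = below P w" using below_tw[OF False] bw by simp
    qed
    hence "v \<in> cls P w \<longleftrightarrow> ramified P v \<and> below (del P y) v = below (del P y) w"
      unfolding cls_def by simp
    also have "\<dots> \<longleftrightarrow> ramified (del P y) v \<and> below (del P y) v = below (del P y) w"
      using ramified_tw[OF False] r False unfolding ramified_alt[of "del P y"] by (auto simp: del_def)
    also have "\<dots> \<longleftrightarrow> v \<in> cls (del P y) w" unfolding cls_def by simp
    finally show ?thesis using False by (auto simp: extxy_def)
  qed
  thus ?thesis by blast
qed

lemma extxy_pair: assumes "y \<notin> B" "x \<noteq> y" shows "extxy x y B = {x, y} \<longleftrightarrow> B = {x}"
proof
  assume e: "extxy x y B = {x, y}"
  show "B = {x}"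
  proof (cases "x \<in> B")
    case True
    hence "insert y B = {x, y}" using e by (simp add: extxy_def)
    hence "B \<subseteq> {x, y}" by blast
    thus ?thesis using True assms(1) by blast
  next
    case False
    hence "B = {x, y}" using e by (simp add: extxy_def)
    thus ?thesis using assms(1) by blast
  qed
next
  assume "B = {x}" thus "extxy x y B = {x, y}" by (simp add: extxy_def insert_commute)
qed

lemma Aset_alt: "Aset P x y = {v \<in> verts P. v \<noteq> y \<and> below (del P y) v = {x}}"
proof (rule set_eqI)
  fix v
  show "v \<in> Aset P x y \<longleftrightarrow> v \<in> {v \<in> verts P. v \<noteq> y \<and> below (del P y) v = {x}}"
  proof (cases "v = y")
    case True
    have "y \<notin> below P y" unfolding below_tw_y using below_del_y by simp
    hence "below P y \<noteq> {x, y}" by blast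
    thus ?thesis using True unfolding Aset_def by simp
  next
    case False
    have "below P v = {x, y} \<longleftrightarrow> below (del P y) v = {x}"
      unfolding below_tw[OF False] by (rule extxy_pair[OF below_del_y xv(3)])
    thus ?thesis using False unfolding Aset_def by simp
  qed
qed

lemma cls_A: assumes a: "a \<in> Aset P x y" shows "cls P a = Aset P x y"
proof -
  have ba: "below P a = {x, y}" using a unfolding Aset_def by auto
  have "v \<in> cls P a \<longleftrightarrow> v \<in> Aset P x y" for v
  proof
    assume "v \<in> cls P a" thus "v \<in> Aset P x y" unfolding cls_def Aset_def ba using ramified_verts by auto
  next
    assume "v \<in> Aset P x y"
    hence "v \<in> verts P" "below P v = {x, y}" unfolding Aset_def by auto
    thus "v \<in> cls P a" unfolding cls_def ramified_alt ba using xv(3) by auto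
  qed
  thus ?thesis by blast
qed

lemma ramified_A: "a \<in> Aset P x y \<Longrightarrow> ramified P a"
  unfolding Aset_def ramified_alt using xv(3) by auto

lemma A_not_ram: "a \<in> Aset P x y \<Longrightarrow> \<not> ramified (del P y) a"
  unfolding Aset_alt ramified_alt by auto

lemma Ram_tw: "Ram P = extxy x y ` Ram (del P y) \<union> (if Aset P x y = {} then {} else {Aset P x y})"
proof (rule set_eqI)
  fix r
  show "r \<in> Ram P \<longleftrightarrow> r \<in> extxy x y ` Ram (del P y) \<union> (if Aset P x y = {} then {} else {Aset P x y})"
  proof
    assume "r \<in> Ram P"
    then obtain w' where w': "ramified P w'" "r = cls P w'" unfolding Ram_cls by blast
    show "r \<in> extxy x y ` Ram (del P y) \<union> (if Aset P x y = {} then {} else {Aset P x y})"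
    proof (cases "w' = y")
      case True
      have rx: "ramified (del P y) x" using ramified_tw_y w' True by simp
      have "cls P y = cls P x" unfolding cls_def below_tw_y below_tw_x by simp
      hence "r = extxy x y (cls (del P y) x)" using cls_tw[OF rx] w' True by simp
      thus ?thesis using rx unfolding Ram_cls by blast
    next
      case False
      show ?thesis
      proof (cases "ramified (del P y) w'")
        case True
        thus ?thesis using cls_tw[OF True] w' unfolding Ram_cls by blast
      next
        case nr: False
        have "x \<in> below (del P y) w'" "w' \<in> verts P" using ramified_tw[OF False] w' nr by auto
        moreover have "below (del P y) w' \<subseteq> {x}"
          using nr \<open>x \<in> below (del P y) w'\<close> \<open>w' \<in> verts P\<close> False
          unfolding ramified_alt by (auto simp: del_def)
        ultimately have "w' \<in> Aset P x y" unfolding Aset_alt using False by auto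
        thus ?thesis using cls_A w' by auto
      qed
    qed
  next
    assume "r \<in> extxy x y ` Ram (del P y) \<union> (if Aset P x y = {} then {} else {Aset P x y})"
    thus "r \<in> Ram P"
    proof
      assume "r \<in> extxy x y ` Ram (del P y)"
      then obtain w' where w': "ramified (del P y) w'" "r = extxy x y (cls (del P y) w')" unfolding Ram_cls by blast
      have "ramified P w'" using ramified_tw[of w'] ramified_del_ne[OF w'(1)] w'(1) by auto
      thus ?thesis using cls_tw[OF w'(1)] w' unfolding Ram_cls by blast
    next
      assume "r \<in> (if Aset P x y = {} then {} else {Aset P x y})"
      then obtain a where "a \<in> Aset P x y" "r = Aset P x y" by (auto split: if_splits)
      thus ?thesis using cls_A ramified_A unfolding Ram_cls by blast
    qed
  qed
qed

lemma cls_del_sub: "cls (del P y) w \<subseteq> verts P - {y}"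
  unfolding cls_def using ramified_del_ne by auto

lemma inj_extxy_Ram: "inj_on (extxy x y) (Ram (del P y))"
proof (rule inj_onI)
  fix r1 r2 assume "r1 \<in> Ram (del P y)" "r2 \<in> Ram (del P y)" "extxy x y r1 = extxy x y r2"
  moreover have "y \<notin> r1" "y \<notin> r2" using calculation(1,2) cls_del_sub unfolding Ram_cls by blast+
  ultimately show "r1 = r2" using extxy_inj by blast
qed

lemma A_notin: "Aset P x y \<noteq> {} \<Longrightarrow> Aset P x y \<notin> extxy x y ` Ram (del P y)"
proof
  assume ne: "Aset P x y \<noteq> {}" and "Aset P x y \<in> extxy x y ` Ram (del P y)"
  then obtain w' where w': "ramified (del P y) w'" "Aset P x y = extxy x y (cls (del P y) w')"
    unfolding Ram_cls by blast
  have "w' \<in> cls (del P y) w'" unfolding cls_def using w'(1) by simp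
  hence "w' \<in> Aset P x y" using w'(2) by (auto simp: extxy_def)
  thus False using A_not_ram w'(1) by blast
qed

lemma rminus_tw: assumes r: "r \<in> Ram (del P y)"
  shows "rminus P (extxy x y r) = extxy x y (rminus (del P y) r) \<and> y \<notin> rminus (del P y) r \<and> y \<notin> r
         \<and> rminus (del P y) r \<subseteq> verts P - {y}"
proof -
  obtain w' where w': "ramified (del P y) w'" "r = cls (del P y) w'" using r unfolding Ram_cls by blast
  have wy: "w' \<noteq> y" "w' \<in> verts P" using ramified_del_ne[OF w'(1)] by auto
  have rP: "ramified P w'" using ramified_tw[OF wy(1)] w'(1) by simp
  have "rminus P (extxy x y r) = below P w'" using rminus_cls[OF rP] cls_tw[OF w'(1)] w'(2) by simp
  moreover have "rminus (del P y) r = below (del P y) w'" using rminus_cls[OF w'(1)] w'(2) by simp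
  moreover have "y \<notin> r" using cls_del_sub[of w'] w'(2) by blast
  ultimately show ?thesis using below_tw[OF wy(1)] below_del_y[of w'] below_del_verts[of w'] by auto
qed

lemma rminus_A: "Aset P x y \<noteq> {} \<Longrightarrow> rminus P (Aset P x y) = {x, y}"
proof -
  assume "Aset P x y \<noteq> {}"
  then obtain a where a: "a \<in> Aset P x y" by blast
  have "rminus P (Aset P x y) = below P a" using rminus_cls[OF ramified_A[OF a]] cls_A[OF a] by simp
  thus ?thesis using a unfolding Aset_def by simp
qed

end


lemma twin_rs: "twin P x y \<Longrightarrow> x \<in> X \<Longrightarrow> y \<in> X \<Longrightarrow> twin (rs P X) x y"
  unfolding twin_def by auto

lemma gen_ext_drop: assumes "wf Q" "y \<notin> verts Q" shows "gen Q (extxy x y B) = gen Q B"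
proof -
  have "extxy x y B \<inter> verts Q = B \<inter> verts Q" using assms(2) by (auto simp: extxy_def)
  thus ?thesis using gen_inter[OF assms(1), of "extxy x y B"] gen_inter[OF assms(1), of B] by simp
qed

lemma prod_split_ram:
  assumes "finite R" "inj_on g R" "A \<notin> g ` R \<or> A = {}"
  shows "(\<Prod>r\<in>g ` R \<union> (if A = {} then {} else {A}). F r) =
         (\<Prod>r\<in>R. F (g r)) * (if A = {} then 1 else F A)"
proof (cases "A = {}")
  case True
  then show ?thesis using prod.reindex[OF assms(2)] by simp
next
  case False
  have "(\<Prod>r\<in>g ` R \<union> {A}. F r) = (\<Prod>r\<in>g ` R. F r) * F A"
    using assms(1,3) False by (simp add: prod.union_disjoint mult.commute)
  then show ?thesis using False prod.reindex[OF assms(2), of F] by (simp add: comp_def)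
qed

lemma f_twin:
  assumes P: "is_shrub P" and t: "twin P x y" and P': "is_shrub (del P y)"
  shows "f_shrub P = usum {x, y} * (1 / (u x * u y)) * rsubst (sb x y) (f_shrub (del P y))"
proof -
  define Q where "Q = del P y"
  have w: "wf P" using shrub_wf[OF P] .
  have wQ: "wf Q" using shrub_wf[OF P'] Q_def by simp
  have fin: "finite (verts P)" using P unfolding is_shrub_def by simp
  have xv: "x \<in> verts P" "y \<in> verts P" "x \<noteq> y" using tw_facts[OF t] by auto
  have VQ: "verts Q = verts P - {y}" unfolding Q_def del_def by auto
  have yQ: "y \<notin> verts Q" using VQ by simp
  define A where "A = Aset P x y"
  define N where "N r = gen (rs Q (verts Q - gen Q r)) (rminus Q r)" for r
  define D where "D r = gen Q (rminus Q r)" for r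
  define Pi1 where "Pi1 = (\<Prod>i\<in>verts Q - {x}. usum (extxy x y (gen Q {i})))"
  define Pi2 where "Pi2 = (\<Prod>r\<in>Ram Q. usum (extxy x y (N r)) / usum (extxy x y (D r)))"
  define Gx where "Gx = usum (extxy x y (gen Q {x}))"
  have gxx: "gen P {x} = {x}" using gen_twin_single[OF P t] .
  have gyy: "gen P {y} = {y}" using gen_twin_single[OF P twin_sym[OF t]] .
  have prod1: "(\<Prod>i\<in>verts P. usum (gen P {i})) = u x * u y * Pi1"
  proof -
    have "(\<Prod>i\<in>verts P. usum (gen P {i})) = usum (gen P {x}) * (\<Prod>i\<in>verts P - {x}. usum (gen P {i}))"
      by (rule prod.remove[OF fin xv(1)])
    also have "(\<Prod>i\<in>verts P - {x}. usum (gen P {i})) = usum (gen P {y}) * (\<Prod>i\<in>verts P - {x} - {y}. usum (gen P {i}))"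
      by (rule prod.remove) (use fin xv in auto)
    also have "(\<Prod>i\<in>verts P - {x} - {y}. usum (gen P {i})) = Pi1"
      unfolding Pi1_def VQ
    proof (rule prod.cong)
      show "verts P - {x} - {y} = verts P - {y} - {x}" by auto
    next
      fix i assume "i \<in> verts P - {y} - {x}"
      hence "x \<in> {i} \<longleftrightarrow> y \<in> {i}" by auto
      thus "usum (gen P {i}) = usum (extxy x y (gen Q {i}))" using gen_twin[OF w t] Q_def by simp
    qed
    finally show ?thesis using gxx gyy by (simp add: usum_def)
  qed
  have prodQ: "(\<Prod>i\<in>verts Q. usum (extxy x y (gen Q {i}))) = Gx * Pi1"
    unfolding Gx_def Pi1_def
    by (rule prod.remove) (use fin xv VQ in auto)
  have termQ: "usum (gen (rs P (verts P - gen P r)) (rminus P r)) / usum (gen P (rminus P r)) =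
     usum (extxy x y (N r')) / usum (extxy x y (D r'))"
    if r': "r' \<in> Ram Q" and rr: "r = extxy x y r'" for r r'
  proof -
    have rm: "rminus P r = extxy x y (rminus Q r')" "y \<notin> rminus Q r'" "y \<notin> r'"
      using rminus_tw[OF w t] r' rr Q_def by auto
    define B where "B = rminus Q r'"
    have den: "gen P (rminus P r) = extxy x y (D r')"
    proof -
      have "gen P (rminus P r) = extxy x y (gen Q (extxy x y B))"
        using gen_twin[OF w t extxy_sym[OF rm(2) xv(3)]] rm(1) B_def Q_def by simp
      thus ?thesis using gen_ext_drop[OF wQ yQ] D_def B_def by simp
    qed
    define G' where "G' = gen Q r'"
    have gr: "gen P r = extxy x y G'"
      using gen_twin[OF w t extxy_sym[OF rm(3) xv(3)]] rr gen_ext_drop[OF wQ yQ] G'_def Q_def by simp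
    have G'V: "G' \<subseteq> verts Q" unfolding G'_def by (rule gen_subset)
    have num: "gen (rs P (verts P - gen P r)) (rminus P r) = extxy x y (N r')"
    proof (cases "x \<in> G'")
      case True
      have R: "rs P (verts P - gen P r) = rs Q (verts Q - G')"
        unfolding Q_def del_def rs_rs
        by (rule rs_cong[OF w]) (use gr True VQ G'V in \<open>auto simp: extxy_def Q_def del_def\<close>)
      have wR: "wf (rs Q (verts Q - G'))" by (rule wf_rs[OF wQ])
      have yR: "y \<notin> verts (rs Q (verts Q - G'))" using yQ by simp
      have "gen (rs P (verts P - gen P r)) (rminus P r) = gen (rs Q (verts Q - G')) B"
        unfolding R rm(1) B_def[symmetric] by (rule gen_ext_drop[OF wR yR])
      moreover have "x \<notin> gen (rs Q (verts Q - G')) B"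
        using gen_subset[of "rs Q (verts Q - G')"] True by auto
      ultimately show ?thesis using N_def B_def G'_def by (simp add: extxy_id)
    next
      case False
      have gr': "gen P r = G'" using gr False by (simp add: extxy_id)
      define R where "R = rs P (verts P - G')"
      have tR: "twin R x y" unfolding R_def
        by (rule twin_rs[OF t]) (use False xv G'V VQ in auto)
      have wR: "wf R" unfolding R_def by (rule wf_rs[OF w])
      have dR: "del R y = rs Q (verts Q - G')"
        unfolding R_def Q_def del_def rs_rs
        by (rule rs_cong[OF w]) (use VQ G'V in \<open>auto simp: Q_def del_def\<close>)
      have wdR: "wf (del R y)" unfolding dR by (rule wf_rs[OF wQ])
      have ydR: "y \<notin> verts (del R y)" unfolding del_def by simp
      have "gen R (extxy x y B) = extxy x y (gen (del R y) (extxy x y B))"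
        using gen_twin[OF wR tR extxy_sym[OF rm(2) xv(3)]] B_def by simp
      also have "gen (del R y) (extxy x y B) = gen (del R y) B" by (rule gen_ext_drop[OF wdR ydR])
      finally show ?thesis using dR gr' R_def N_def B_def G'_def rm(1) by simp
    qed
    show ?thesis using num den by simp
  qed
  have A_heights: "\<forall>v\<in>A. ht P v = Suc (ht P x)"
  proof
    fix v assume "v \<in> A"
    hence "x \<in> below P v" unfolding A_def Aset_def by auto
    thus "ht P v = Suc (ht P x)" unfolding below_def using covers_ht by auto
  qed
  have termA: "usum (gen (rs P (verts P - gen P A)) (rminus P A)) / usum (gen P (rminus P A)) = usum {x, y} / Gx"
    if ne: "A \<noteq> {}"
  proof -
    have rmA: "rminus P A = {x, y}" using rminus_A[OF w t] ne A_def by simp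
    have e: "extxy x y {x} = {x, y}" by (simp add: extxy_def insert_commute)
    have "gen P {x, y} = extxy x y (gen Q {x, y})"
      using gen_twin[OF w t, of "{x, y}"] Q_def by simp
    also have "gen Q {x, y} = gen Q {x}" using gen_ext_drop[OF wQ yQ, of x "{x}"] e by simp
    finally have den: "gen P {x, y} = extxy x y (gen Q {x})" .
    define R where "R = rs P (verts P - gen P A)"
    have hA: "\<forall>v\<in>A. ht P x \<le> ht P v" "\<forall>v\<in>A. ht P y \<le> ht P v" using A_heights tw_ht[OF t] by auto
    have xA: "x \<notin> A"
    proof
      assume "x \<in> A" hence "ht P x = Suc (ht P x)" using A_heights by blast
      thus False by simp
    qed
    have yA: "y \<notin> A"
    proof
      assume "y \<in> A" hence "ht P y = Suc (ht P x)" using A_heights by blast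
      thus False using tw_ht[OF t] by simp
    qed
    have pxA: "pth P A x" "pth P A y"
      using pth_low[OF shrub_pth[OF P xv(1)] xA hA(1)] pth_low[OF shrub_pth[OF P xv(2)] yA hA(2)] by auto
    have xyR: "x \<in> verts R" "y \<in> verts R" using pxA pth_not_gen xv unfolding R_def by auto
    have "gen R {x, y} = {x, y}"
    proof -
      have "j \<notin> gen R {x, y}" if j: "j \<in> verts R" "j \<notin> {x, y}" for j
      proof -
        have jv: "j \<in> verts P" "j \<notin> gen P A" using j unfolding R_def by auto
        hence "pth P A j" by (simp add: gen_pth)
        hence p: "pth P (A \<union> {x, y}) j" using twin_avoid[OF P t] j(2) A_def by simp
        have "pth R (A \<union> {x, y}) j" unfolding R_def
        proof (rule pth_rs[OF p w])
          show "\<forall>v. pth P (A \<union> {x, y}) v \<longrightarrow> v \<in> verts P \<longrightarrow> v \<in> verts P - gen P A"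
            using pth_mono pth_not_gen by blast
        qed
        hence "pth R {x, y} j" by (rule pth_mono) auto
        thus ?thesis by (rule pth_not_gen)
      qed
      moreover have "{x, y} \<subseteq> gen R {x, y}" using gen_contains[of "{x, y}" R] xyR by auto
      ultimately show ?thesis using gen_subset[of R "{x, y}"] by blast
    qed
    thus ?thesis using rmA den R_def Gx_def by simp
  qed
  have GxA: "Gx = usum {x, y}" if e: "A = {}"
  proof -
    have "gen Q {x} = {x}"
    proof -
      have "j \<notin> gen Q {x}" if j: "j \<in> verts Q" "j \<noteq> x" for j
      proof -
        have jv: "j \<in> verts P" "j \<noteq> y" using j VQ by auto
        have "pth P A j" using shrub_pth[OF P jv(1)] e by simp
        hence "pth P (A \<union> {x, y}) j" using twin_avoid[OF P t] j jv A_def by simp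
        hence "pth P {x, y} j" using e by simp
        hence "pth Q {x, y} j" using pth_twin[OF w t _ jv(1)] jv(2) Q_def by (simp add: phi_def)
        hence "pth Q {x} j" by (rule pth_mono) auto
        thus ?thesis by (rule pth_not_gen)
      qed
      moreover have "x \<in> gen Q {x}" using gen_contains[of "{x}" Q] xv VQ by auto
      ultimately show ?thesis using gen_subset[of Q "{x}"] by blast
    qed
    thus ?thesis unfolding Gx_def by (simp add: extxy_def insert_commute)
  qed
  have RamP: "Ram P = extxy x y ` Ram Q \<union> (if A = {} then {} else {A})"
    using Ram_tw[OF w t] Q_def A_def by simp
  have finQ: "finite (Ram Q)" using finite_Ram fin VQ by auto
  have prod2: "(\<Prod>r\<in>Ram P. usum (gen (rs P (verts P - gen P r)) (rminus P r)) / usum (gen P (rminus P r)))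
      = Pi2 * (if A = {} then 1 else usum {x, y} / Gx)"
  proof -
    have "(\<Prod>r\<in>Ram P. usum (gen (rs P (verts P - gen P r)) (rminus P r)) / usum (gen P (rminus P r)))
      = (\<Prod>r\<in>Ram Q. usum (gen (rs P (verts P - gen P (extxy x y r))) (rminus P (extxy x y r))) / usum (gen P (rminus P (extxy x y r))))
        * (if A = {} then 1 else usum (gen (rs P (verts P - gen P A)) (rminus P A)) / usum (gen P (rminus P A)))"
      unfolding RamP
      by (rule prod_split_ram[OF finQ]) (use inj_extxy_Ram[OF w t] A_notin[OF w t] Q_def A_def in auto)
    also have "(\<Prod>r\<in>Ram Q. usum (gen (rs P (verts P - gen P (extxy x y r))) (rminus P (extxy x y r))) / usum (gen P (rminus P (extxy x y r)))) = Pi2"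
      unfolding Pi2_def by (rule prod.cong) (use termQ in auto)
    finally show ?thesis using termA by simp
  qed
  have fP: "f_shrub P = (1 / (u x * u y * Pi1)) * (Pi2 * (if A = {} then 1 else usum {x, y} / Gx))"
    unfolding f_shrub_def prod1 prod2 ..
  have fQ: "rsubst (sb x y) (f_shrub Q) = (1 / (Gx * Pi1)) * Pi2"
    using rsubst_f[OF P' _ xv(3)] Q_def yQ prodQ Pi2_def N_def D_def by simp
  have sxy: "usum {x, y} \<noteq> 0" by (rule usum_nonzero) auto
  show ?thesis
  proof (cases "A = {}")
    case True
    show ?thesis unfolding fP fQ[unfolded Q_def] using True GxA[OF True] sxy
      by (simp add: divide_inverse inverse_mult_distrib mult_ac)
  next
    case False
    show ?thesis unfolding fP fQ[unfolded Q_def] using False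
      by (simp add: divide_inverse inverse_mult_distrib mult_ac)
  qed
qed


lemma shrub_fin: "is_shrub P \<Longrightarrow> finite (verts P)"
  unfolding is_shrub_def by simp
lemma shrub_ne: "is_shrub P \<Longrightarrow> verts P \<noteq> {}"
  unfolding is_shrub_def by simp
lemma shrub_ax1: "is_shrub P \<Longrightarrow> {a, b} \<in> edges P \<Longrightarrow> ht P a = ht P b + 1 \<or> ht P b = ht P a + 1"
  unfolding is_shrub_def by blast
lemma shrub_ax2: "is_shrub P \<Longrightarrow> j \<in> verts P \<Longrightarrow> 0 < ht P j \<Longrightarrow> \<exists>i. covers P j i"
  unfolding is_shrub_def by blast
lemma shrub_ax3: "is_shrub P \<Longrightarrow> distinct [a, b, c, d] \<Longrightarrow> covers P a b \<Longrightarrow> covers P a c \<Longrightarrow> covers P c d \<Longrightarrow> {b, d} \<in> edges P"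
  unfolding is_shrub_def by blast
lemma shrub_ax4: "is_shrub P \<Longrightarrow> distinct [a, b, c, d, e] \<Longrightarrow> covers P a c \<Longrightarrow> covers P a d \<Longrightarrow>
   covers P b d \<Longrightarrow> covers P b e \<Longrightarrow> {a, e} \<in> edges P \<or> {b, c} \<in> edges P"
  unfolding is_shrub_def by blast

lemma shrub_rs:
  assumes P: "is_shrub P" and ne: "verts P \<inter> X \<noteq> {}"
    and ax2: "\<forall>j\<in>verts P \<inter> X. 0 < ht P j \<longrightarrow> (\<exists>i\<in>X. covers P j i)"
  shows "is_shrub (rs P X)"
proof -
  have w: "wf P" using shrub_wf[OF P] .
  have wR: "wf (rs P X)" using wf_rs[OF w] .
  have c1: "finite (verts (rs P X))" using shrub_fin[OF P] by simp
  have c2: "verts (rs P X) \<noteq> {}" using ne by simp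
  have c3: "(\<forall>e\<in>edges (rs P X). \<exists>a b. a \<in> verts (rs P X) \<and> b \<in> verts (rs P X) \<and> a \<noteq> b \<and> e = {a, b})
            \<and> (\<forall>n. n \<notin> verts (rs P X) \<longrightarrow> ht (rs P X) n = 0)"
    using wR unfolding wf_def by blast
  have c5: "\<forall>a b. {a, b} \<in> edges (rs P X) \<longrightarrow> ht (rs P X) a = ht (rs P X) b + 1 \<or> ht (rs P X) b = ht (rs P X) a + 1"
  proof (intro allI impI)
    fix a b assume e: "{a, b} \<in> edges (rs P X)"
    hence "a \<in> verts P \<inter> X" "b \<in> verts P \<inter> X" using edge_verts[OF wR e] by auto
    moreover have "{a, b} \<in> edges P" using e by simp
    ultimately show "ht (rs P X) a = ht (rs P X) b + 1 \<or> ht (rs P X) b = ht (rs P X) a + 1"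
      using shrub_ax1[OF P] by simp
  qed
  have c6: "\<forall>j\<in>verts (rs P X). ht (rs P X) j > 0 \<longrightarrow> (\<exists>i. covers (rs P X) j i)"
  proof (intro ballI impI)
    fix j assume j: "j \<in> verts (rs P X)" "ht (rs P X) j > 0"
    then obtain i where "i \<in> X" "covers P j i" using ax2 by auto
    thus "\<exists>i. covers (rs P X) j i" using covers_rs[OF w] j by auto
  qed
  have c7: "\<not> (\<exists>a b c d. distinct [a, b, c, d] \<and> covers (rs P X) a b \<and> covers (rs P X) a c \<and> covers (rs P X) c d
            \<and> {b, d} \<notin> edges (rs P X))"
  proof
    assume "\<exists>a b c d. distinct [a, b, c, d] \<and> covers (rs P X) a b \<and> covers (rs P X) a c \<and> covers (rs P X) c d
            \<and> {b, d} \<notin> edges (rs P X)"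
    then obtain a b c d where h: "distinct [a, b, c, d]" "covers (rs P X) a b" "covers (rs P X) a c" "covers (rs P X) c d"
            "{b, d} \<notin> edges (rs P X)" by blast
    have "covers P a b" "covers P a c" "covers P c d" "b \<in> X" "d \<in> X" using h covers_rs[OF w] by auto
    hence "{b, d} \<in> edges P" using shrub_ax3[OF P h(1)] by blast
    thus False using h(5) \<open>b \<in> X\<close> \<open>d \<in> X\<close> by simp
  qed
  have c8: "\<not> (\<exists>a b c d e. distinct [a, b, c, d, e] \<and> covers (rs P X) a c \<and> covers (rs P X) a d \<and>
            covers (rs P X) b d \<and> covers (rs P X) b e \<and> {a, e} \<notin> edges (rs P X) \<and> {b, c} \<notin> edges (rs P X))"
  proof
    assume "\<exists>a b c d e. distinct [a, b, c, d, e] \<and> covers (rs P X) a c \<and> covers (rs P X) a d \<and>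
            covers (rs P X) b d \<and> covers (rs P X) b e \<and> {a, e} \<notin> edges (rs P X) \<and> {b, c} \<notin> edges (rs P X)"
    then obtain a b c d e where h: "distinct [a, b, c, d, e]" "covers (rs P X) a c" "covers (rs P X) a d"
            "covers (rs P X) b d" "covers (rs P X) b e" "{a, e} \<notin> edges (rs P X)" "{b, c} \<notin> edges (rs P X)" by blast
    have "covers P a c" "covers P a d" "covers P b d" "covers P b e" "a \<in> X" "b \<in> X" "c \<in> X" "e \<in> X"
      using h covers_rs[OF w] by auto
    hence "{a, e} \<in> edges P \<or> {b, c} \<in> edges P" using shrub_ax4[OF P h(1)] by blast
    thus False using h(6,7) \<open>a \<in> X\<close> \<open>b \<in> X\<close> \<open>c \<in> X\<close> \<open>e \<in> X\<close> by auto
  qed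
  show ?thesis unfolding is_shrub_def using c1 c2 c3 c5 c6 c7 c8 by blast
qed

lemma shrub_del_leaf:
  assumes P: "is_shrub P" and l: "leaf P x y" shows "is_shrub (del P y)"
  unfolding del_def
proof (rule shrub_rs[OF P])
  show "verts P \<inter> (verts P - {y}) \<noteq> {}" using l unfolding leaf_def by auto
next
  show "\<forall>j\<in>verts P \<inter> (verts P - {y}). 0 < ht P j \<longrightarrow> (\<exists>i\<in>verts P - {y}. covers P j i)"
  proof (intro ballI impI)
    fix j assume j: "j \<in> verts P \<inter> (verts P - {y})" "0 < ht P j"
    then obtain i where i: "covers P j i" using shrub_ax2[OF P] by blast
    have "i \<noteq> y" using leaf_no_cover[OF l] i by blast
    thus "\<exists>i\<in>verts P - {y}. covers P j i" using i covers_verts[OF shrub_wf[OF P] i] by blast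
  qed
qed

lemma shrub_del_twin:
  assumes P: "is_shrub P" and t: "twin P x y" shows "is_shrub (del P y)"
  unfolding del_def
proof (rule shrub_rs[OF P])
  show "verts P \<inter> (verts P - {y}) \<noteq> {}" using tw_facts[OF t] by auto
next
  show "\<forall>j\<in>verts P \<inter> (verts P - {y}). 0 < ht P j \<longrightarrow> (\<exists>i\<in>verts P - {y}. covers P j i)"
  proof (intro ballI impI)
    fix j assume j: "j \<in> verts P \<inter> (verts P - {y})" "0 < ht P j"
    then obtain i where i: "covers P j i" using shrub_ax2[OF P] by blast
    show "\<exists>i\<in>verts P - {y}. covers P j i"
    proof (cases "i = y")
      case False thus ?thesis using i covers_verts[OF shrub_wf[OF P] i] by blast
    next
      case True
      have "j \<noteq> x" using covers_ht[OF i] True tw_ht[OF t] by auto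
      hence "covers P j x" using tw_cov_down[OF t] i True j by auto
      thus ?thesis using tw_facts[OF t] by auto
    qed
  qed
qed

lemma card_del: "finite (verts P) \<Longrightarrow> y \<in> verts P \<Longrightarrow> card (verts (del P y)) < card (verts P)"
proof -
  assume a: "finite (verts P)" "y \<in> verts P"
  have "verts (del P y) = verts P - {y}" unfolding del_def by auto
  thus ?thesis using card_Diff1_less[OF a] by simp
qed


lemma two_elems: "finite V \<Longrightarrow> 2 \<le> card V \<Longrightarrow> \<exists>x y. x \<in> V \<and> y \<in> V \<and> x \<noteq> y"
proof -
  assume f: "finite V" and c: "2 \<le> card V"
  hence "V \<noteq> {}" by auto
  then obtain x where x: "x \<in> V" by blast
  have "card (V - {x}) \<ge> 1" using c f x by simp
  have "V - {x} \<noteq> {}"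
  proof
    assume "V - {x} = {}" with \<open>card (V - {x}) \<ge> 1\<close> show False by simp
  qed
  then obtain y where "y \<in> V - {x}" by blast
  thus ?thesis using x by blast
qed

lemma decomp:
  assumes P: "is_shrub P" and c: "2 \<le> card (verts P)"
  shows "\<exists>x y. leaf P x y \<or> twin P x y"
proof -
  have w: "wf P" using shrub_wf[OF P] .
  have fin: "finite (verts P)" using shrub_fin[OF P] .
  show ?thesis
  proof (cases "\<forall>v\<in>verts P. ht P v = 0")
    case True
    obtain x y where xy: "x \<in> verts P" "y \<in> verts P" "x \<noteq> y" using two_elems[OF fin c] by blast
    have noe: "{a, b} \<notin> edges P" if "b \<in> verts P" for a b
    proof
      assume e: "{a, b} \<in> edges P"
      hence "a \<in> verts P" using edge_verts[OF w] by blast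
      thus False using shrub_ax1[OF P e] True that by auto
    qed
    have "twin P x y" unfolding twin_def
    proof (intro conjI)
      show "x \<in> verts P" "y \<in> verts P" "x \<noteq> y" using xy by auto
      show "ht P x = ht P y" using True xy by simp
      show "{x, y} \<notin> edges P" using noe[OF xy(2)] .
      show "\<forall>v. v \<noteq> x \<longrightarrow> v \<noteq> y \<longrightarrow> ({v, x} \<in> edges P) = ({v, y} \<in> edges P)"
        using noe[OF xy(1)] noe[OF xy(2)] by blast
    qed
    thus ?thesis by blast
  next
    case False
    define H where "H = Max (ht P ` verts P)"
    have leH: "ht P v \<le> H" if "v \<in> verts P" for v unfolding H_def using fin that by simp
    obtain v1 where v1: "v1 \<in> verts P" "ht P v1 \<noteq> 0" using False by blast
    have Hpos: "0 < H" using leH[OF v1(1)] v1(2) by simp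
    define T where "T = {v \<in> verts P. ht P v = H}"
    have "H \<in> ht P ` verts P" unfolding H_def using fin shrub_ne[OF P] by simp
    hence Tne: "T \<noteq> {}" unfolding T_def by auto
    have nocov: "\<not> covers P a v" if "v \<in> T" for a v
    proof
      assume cv: "covers P a v"
      hence "a \<in> verts P" using covers_verts[OF w] by blast
      hence "ht P a \<le> H" by (rule leH)
      moreover have "ht P a = Suc (ht P v)" using covers_ht[OF cv] .
      moreover have "ht P v = H" using that unfolding T_def by simp
      ultimately show False by simp
    qed
    define n0 where "n0 = (LEAST n. \<exists>v\<in>T. card (below P v) = n)"
    obtain y0 where y0: "y0 \<in> T" "card (below P y0) = n0"
      using LeastI_ex[of "\<lambda>n. \<exists>v\<in>T. card (below P v) = n"] Tne unfolding n0_def by blast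
    have minl: "n0 \<le> card (below P v)" if "v \<in> T" for v
      unfolding n0_def by (rule Least_le) (use that in blast)
    have y0v: "y0 \<in> verts P" "ht P y0 = H" using y0 unfolding T_def by auto
    have finb: "finite (below P v)" for v using below_verts[OF w] fin finite_subset by blast
    obtain i0 where i0: "covers P y0 i0" using shrub_ax2[OF P y0v(1)] y0v Hpos by auto
    have bne: "below P y0 \<noteq> {}" using i0 unfolding below_def by auto
    have hb: "ht P b = H - 1" "H = Suc (ht P b)" if "b \<in> below P y0" for b
      using that covers_ht y0v unfolding below_def by auto
    show ?thesis
    proof (cases "card (below P y0) = 1")
      case True
      then obtain x where bx: "below P y0 = {x}" using card_1_singletonE by blast
      have cx: "covers P y0 x" using bx unfolding below_def by auto
      have "leaf P x y0" unfolding leaf_def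
      proof (intro conjI)
        show "x \<in> verts P" "y0 \<in> verts P" "x \<noteq> y0" using covers_verts[OF w cx] by auto
        show "{x, y0} \<in> edges P" using cx unfolding covers_def by simp
        show "ht P y0 = Suc (ht P x)" using covers_ht[OF cx] .
        show "\<forall>e\<in>edges P. y0 \<in> e \<longrightarrow> e = {x, y0}"
        proof (intro ballI impI)
          fix e assume e: "e \<in> edges P" "y0 \<in> e"
          have "\<forall>e\<in>edges P. \<exists>a b. a \<in> verts P \<and> b \<in> verts P \<and> a \<noteq> b \<and> e = {a, b}" using w unfolding wf_def by simp
          then obtain a b where ab: "a \<in> verts P" "b \<in> verts P" "a \<noteq> b" "e = {a, b}" using e(1) by blast
          have "y0 = a \<or> y0 = b" using ab(4) e(2) by simp
          then obtain z where z: "e = {z, y0}" "z \<noteq> y0"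
          proof
            assume "y0 = a" thus ?thesis using that[of b] ab by (simp add: insert_commute)
          next
            assume "y0 = b" thus ?thesis using that[of a] ab by simp
          qed
          have "{z, y0} \<in> edges P" using z e by simp
          hence "ht P z = ht P y0 + 1 \<or> ht P y0 = ht P z + 1" using shrub_ax1[OF P] by blast
          moreover have "z \<in> verts P" using edge_verts[OF w \<open>{z, y0} \<in> edges P\<close>] by simp
          ultimately have "ht P y0 = ht P z + 1" using leH[of z] y0v(2) by linarith
          hence "covers P y0 z" using \<open>{z, y0} \<in> edges P\<close> unfolding covers_def by simp
          hence "z = x" using bx unfolding below_def by auto
          thus "e = {x, y0}" using z by simp
        qed
      qed
      thus ?thesis by blast
    next
      case False
      hence "card (below P y0) \<ge> 2" using bne finb[of y0] by (cases "card (below P y0)") auto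
      then obtain b c where bc: "b \<in> below P y0" "c \<in> below P y0" "b \<noteq> c"
        using two_elems[OF finb] by blast
      have K: "{v, c'} \<in> edges P"
        if b': "b' \<in> below P y0" and c': "c' \<in> below P y0" and bc': "b' \<noteq> c'"
          and v: "v \<noteq> b'" "v \<noteq> c'" and e: "{v, b'} \<in> edges P" for b' c' v
      proof -
        have vv: "v \<in> verts P" using edge_verts[OF w e] by simp
        have cb: "covers P y0 b'" "covers P y0 c'" using b' c' unfolding below_def by auto
        have hb': "H = Suc (ht P b')" "H = Suc (ht P c')" using hb(2)[OF b'] hb(2)[OF c'] by auto
        have "ht P v = ht P b' + 1 \<or> ht P b' = ht P v + 1" using shrub_ax1[OF P e] .
        thus ?thesis
        proof
          assume hv: "ht P b' = ht P v + 1"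
          have cbv: "covers P b' v" using e hv unfolding covers_def by simp
          have "distinct [y0, c', b', v]" using bc' v hb' hv y0v by auto
          hence "{c', v} \<in> edges P" using shrub_ax3[OF P _ cb(2) cb(1) cbv] by blast
          thus ?thesis by (simp add: insert_commute)
        next
          assume hv: "ht P v = ht P b' + 1"
          show ?thesis
          proof (rule ccontr)
            assume nc: "{v, c'} \<notin> edges P"
            have cvb: "covers P v b'" using e hv unfolding covers_def by (simp add: insert_commute)
            have vy: "v \<noteq> y0"
            proof
              assume "v = y0"
              hence "{c', v} \<in> edges P" using cb(2) unfolding covers_def by simp
              thus False using nc by (simp add: insert_commute)
            qed
            have sub: "below P v \<subseteq> below P y0"
            proof
              fix e' assume "e' \<in> below P v"
              hence ce: "covers P v e'" unfolding below_def by simp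
              show "e' \<in> below P y0"
              proof (cases "e' = b'")
                case True thus ?thesis using b' by simp
              next
                case False
                have "e' \<noteq> c'" using ce nc unfolding covers_def by (auto simp: insert_commute)
                have he: "ht P v = Suc (ht P e')" using covers_ht[OF ce] .
                have "distinct [y0, v, c', b', e']" using vy bc' v hb' hv he y0v False \<open>e' \<noteq> c'\<close> by auto
                hence "{y0, e'} \<in> edges P \<or> {v, c'} \<in> edges P"
                  using shrub_ax4[OF P _ cb(2) cb(1) cvb ce] by blast
                hence "{y0, e'} \<in> edges P" using nc by blast
                hence "covers P y0 e'" using he hv hb' y0v unfolding covers_def by (simp add: insert_commute)
                thus ?thesis unfolding below_def by simp
              qed
            qed
            have "c' \<notin> below P v" using nc unfolding below_def covers_def by (auto simp: insert_commute)
            hence "below P v \<subset> below P y0" using sub c' by blast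
            hence "card (below P v) < card (below P y0)" using psubset_card_mono[OF finb] by blast
            moreover have "v \<in> T" unfolding T_def using vv hv hb' by auto
            ultimately show False using minl y0(2) by fastforce
          qed
        qed
      qed
      have "twin P b c" unfolding twin_def
      proof (intro conjI)
        show "b \<in> verts P" "c \<in> verts P" using bc below_verts[OF w] by auto
        show "b \<noteq> c" using bc by simp
        show "ht P b = ht P c" using hb(2)[OF bc(1)] hb(2)[OF bc(2)] by simp
        show "{b, c} \<notin> edges P"
        proof
          assume "{b, c} \<in> edges P"
          hence "ht P b = ht P c + 1 \<or> ht P c = ht P b + 1" by (rule shrub_ax1[OF P])
          thus False using hb(2)[OF bc(1)] hb(2)[OF bc(2)] by simp
        qed
        show "\<forall>v. v \<noteq> b \<longrightarrow> v \<noteq> c \<longrightarrow> ({v, b} \<in> edges P) = ({v, c} \<in> edges P)"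
        proof (intro allI impI iffI)
          fix v assume "v \<noteq> b" "v \<noteq> c" "{v, b} \<in> edges P"
          thus "{v, c} \<in> edges P" using K[OF bc(1) bc(2) bc(3)] by blast
        next
          fix v assume "v \<noteq> b" "v \<noteq> c" "{v, c} \<in> edges P"
          thus "{v, b} \<in> edges P" using K[OF bc(2) bc(1) bc(3)[symmetric]] by blast
        qed
      qed
      thus ?thesis by blast
    qed
  qed
qed


lemma shrub_eqI: "verts P = verts Q \<Longrightarrow> edges P = edges Q \<Longrightarrow> ht P = ht Q \<Longrightarrow> P = (Q::shrub)"
  by (cases P, cases Q) simp

lemma edge_shrub_simps [simp]:
  "verts (edge_shrub a b) = {a, b}" "edges (edge_shrub a b) = {{a, b}}"
  "ht (edge_shrub a b) n = (if n = b then 1 else 0)"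
  by (simp_all add: edge_shrub_def)

lemma two_roots_simps [simp]:
  "verts (two_roots a b) = {a, b}" "edges (two_roots a b) = {}" "ht (two_roots a b) n = 0"
  by (simp_all add: two_roots_def)

lemma unit_shrub_simps [simp]:
  "verts (unit_shrub a) = {a}" "edges (unit_shrub a) = {}" "ht (unit_shrub a) n = 0"
  by (simp_all add: unit_shrub_def)

lemma edge_other: "wf P \<Longrightarrow> e \<in> edges P \<Longrightarrow> v \<in> e \<Longrightarrow> \<exists>j. j \<in> verts P \<and> j \<noteq> v \<and> e = {j, v}"
proof -
  assume w: "wf P" and e: "e \<in> edges P" and v: "v \<in> e"
  have "\<forall>e\<in>edges P. \<exists>a b. a \<in> verts P \<and> b \<in> verts P \<and> a \<noteq> b \<and> e = {a, b}" using w unfolding wf_def by simp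
  then obtain a b where ab: "a \<in> verts P" "b \<in> verts P" "a \<noteq> b" "e = {a, b}" using e by blast
  have "v = a \<or> v = b" using ab(4) v by simp
  thus ?thesis
  proof
    assume "v = a" thus ?thesis using ab by (intro exI[of _ b]) (auto simp: insert_commute)
  next
    assume "v = b" thus ?thesis using ab by (intro exI[of _ a]) auto
  qed
qed

lemma edge_subset: "wf P \<Longrightarrow> e \<in> edges P \<Longrightarrow> e \<subseteq> verts P"
proof -
  assume w: "wf P" and e: "e \<in> edges P"
  have "\<forall>e\<in>edges P. \<exists>a b. a \<in> verts P \<and> b \<in> verts P \<and> a \<noteq> b \<and> e = {a, b}" using w unfolding wf_def by simp
  then obtain a b where "a \<in> verts P" "b \<in> verts P" "e = {a, b}" using e by blast
  thus ?thesis by simp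
qed

lemma comp_leaf:
  assumes P: "is_shrub P" and l: "leaf P x y"
  shows "shrub_comp (del P y) x (edge_shrub x y) = P"
proof (rule shrub_eqI)
  have w: "wf P" using shrub_wf[OF P] .
  have xv: "x \<in> verts P" "y \<in> verts P" "x \<noteq> y" using l unfolding leaf_def by auto
  have hy: "ht P y = Suc (ht P x)" using l unfolding leaf_def by simp
  have ly: "\<forall>e\<in>edges P. y \<in> e \<longrightarrow> e = {x, y}" using l unfolding leaf_def by simp
  have exy: "{x, y} \<in> edges P" using l unfolding leaf_def by simp
  have vd: "verts (del P y) = verts P - {y}" unfolding del_def by auto
  have ed: "edges (del P y) = {e \<in> edges P. e \<subseteq> verts P - {y}}" unfolding del_def by simp
  show "verts (shrub_comp (del P y) x (edge_shrub x y)) = verts P"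
    unfolding shrub_comp_def vd using xv by auto
  show "ht (shrub_comp (del P y) x (edge_shrub x y)) = ht P"
  proof
    fix n
    show "ht (shrub_comp (del P y) x (edge_shrub x y)) n = ht P n"
      unfolding shrub_comp_def using xv hy w unfolding wf_def by (auto simp: del_def)
  qed
  show "edges (shrub_comp (del P y) x (edge_shrub x y)) = edges P"
  proof (rule set_eqI)
    fix e
    have E: "edges (shrub_comp (del P y) x (edge_shrub x y)) =
       {e \<in> edges (del P y). x \<notin> e} \<union> {{x, y}} \<union> {{j, k} |j k. {j, x} \<in> edges (del P y) \<and> k \<in> {x, y} \<and> ht (edge_shrub x y) k = 0}"
      unfolding shrub_comp_def by simp
    have third: "{{j, k} |j k. {j, x} \<in> edges (del P y) \<and> k \<in> {x, y} \<and> ht (edge_shrub x y) k = 0}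
       = {{j, x} |j. {j, x} \<in> edges (del P y)}"
      using xv by auto
    show "e \<in> edges (shrub_comp (del P y) x (edge_shrub x y)) \<longleftrightarrow> e \<in> edges P"
    proof
      assume "e \<in> edges (shrub_comp (del P y) x (edge_shrub x y))"
      hence "e \<in> {e \<in> edges (del P y). x \<notin> e} \<or> e = {x, y} \<or> (\<exists>j. e = {j, x} \<and> {j, x} \<in> edges (del P y))"
        unfolding E third by blast
      moreover have "edges (del P y) \<subseteq> edges P" using ed by blast
      ultimately show "e \<in> edges P" using exy by blast
    next
      assume e: "e \<in> edges P"
      show "e \<in> edges (shrub_comp (del P y) x (edge_shrub x y))"
      proof (cases "y \<in> e")
        case True
        hence "e = {x, y}" using ly e by blast
        thus ?thesis unfolding E by blast
      next
        case False
        have "e \<subseteq> verts P" using edge_subset[OF w e] .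
        hence ed': "e \<in> edges (del P y)" using False e ed by auto
        show ?thesis
        proof (cases "x \<in> e")
          case False thus ?thesis using ed' unfolding E by blast
        next
          case True
          obtain j where j: "e = {j, x}" using edge_other[OF w e True] by blast
          thus ?thesis using ed' unfolding E third by blast
        qed
      qed
    qed
  qed
qed

lemma comp_twin:
  assumes P: "is_shrub P" and t: "twin P x y"
  shows "shrub_comp (del P y) x (two_roots x y) = P"
proof (rule shrub_eqI)
  have w: "wf P" using shrub_wf[OF P] .
  have xv: "x \<in> verts P" "y \<in> verts P" "x \<noteq> y" using tw_facts[OF t] by auto
  have hy: "ht P y = ht P x" using tw_ht[OF t] by simp
  have vd: "verts (del P y) = verts P - {y}" unfolding del_def by auto
  have ed: "edges (del P y) = {e \<in> edges P. e \<subseteq> verts P - {y}}" unfolding del_def by simp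
  have nxy: "{x, y} \<notin> edges P" using t unfolding twin_def by simp
  have tw: "\<forall>v. v \<noteq> x \<longrightarrow> v \<noteq> y \<longrightarrow> ({v, x} \<in> edges P \<longleftrightarrow> {v, y} \<in> edges P)" using t unfolding twin_def by simp
  show "verts (shrub_comp (del P y) x (two_roots x y)) = verts P"
    unfolding shrub_comp_def vd using xv by auto
  show "ht (shrub_comp (del P y) x (two_roots x y)) = ht P"
  proof
    fix n
    show "ht (shrub_comp (del P y) x (two_roots x y)) n = ht P n"
      unfolding shrub_comp_def using xv hy w unfolding wf_def by (auto simp: del_def)
  qed
  show "edges (shrub_comp (del P y) x (two_roots x y)) = edges P"
  proof (rule set_eqI)
    fix e
    have E: "edges (shrub_comp (del P y) x (two_roots x y)) =
       {e \<in> edges (del P y). x \<notin> e} \<union> {{j, k} |j k. {j, x} \<in> edges (del P y) \<and> k \<in> {x, y}}"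
      unfolding shrub_comp_def by simp
    show "e \<in> edges (shrub_comp (del P y) x (two_roots x y)) \<longleftrightarrow> e \<in> edges P"
    proof
      assume "e \<in> edges (shrub_comp (del P y) x (two_roots x y))"
      hence "e \<in> {e \<in> edges (del P y). x \<notin> e} \<or> (\<exists>j k. e = {j, k} \<and> {j, x} \<in> edges (del P y) \<and> k \<in> {x, y})"
        unfolding E by blast
      thus "e \<in> edges P"
      proof
        assume "e \<in> {e \<in> edges (del P y). x \<notin> e}" thus ?thesis using ed by auto
      next
        assume "\<exists>j k. e = {j, k} \<and> {j, x} \<in> edges (del P y) \<and> k \<in> {x, y}"
        then obtain j k where jk: "e = {j, k}" "{j, x} \<in> edges (del P y)" "k \<in> {x, y}" by blast
        have jx: "{j, x} \<in> edges P" "j \<noteq> y" "j \<noteq> x" using jk(2) ed edge_verts[OF w, of j x] by auto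
        show ?thesis
        proof (cases "k = x")
          case True thus ?thesis using jk jx by simp
        next
          case False
          hence "k = y" using jk(3) by simp
          thus ?thesis using jk jx tw by auto
        qed
      qed
    next
      assume e: "e \<in> edges P"
      have ev: "e \<subseteq> verts P" using edge_subset[OF w e] .
      show "e \<in> edges (shrub_comp (del P y) x (two_roots x y))"
      proof (cases "x \<in> e")
        case True
        obtain j where j: "e = {j, x}" "j \<noteq> x" "j \<in> verts P" using edge_other[OF w e True] by blast
        have "j \<noteq> y" using nxy e j by (auto simp: insert_commute)
        hence "{j, x} \<in> edges (del P y)" using e j xv ed by auto
        thus ?thesis unfolding E using j by blast
      next
        case False
        show ?thesis
        proof (cases "y \<in> e")
          case False
          hence "e \<in> edges (del P y)" using e ev ed by auto
          thus ?thesis unfolding E using \<open>x \<notin> e\<close> by blast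
        next
          case True
          obtain j where j: "e = {j, y}" "j \<noteq> y" "j \<in> verts P" using edge_other[OF w e True] by blast
          have "j \<noteq> x" using False j by auto
          hence "{j, x} \<in> edges P" using tw j e by auto
          hence "{j, x} \<in> edges (del P y)" using j xv ed by auto
          thus ?thesis unfolding E using j by blast
        qed
      qed
    qed
  qed
qed


lemma u_nz: "u m \<noteq> 0"
  using usum_nonzero[of "{m}"] by (simp add: usum_def)

lemma u2_nz: "m \<noteq> b \<Longrightarrow> u m + u b \<noteq> 0"
  using usum_nonzero[of "{m, b}"] by (simp add: usum_def)

lemma rsubst_F:
  assumes "g p \<noteq> 0" "g q + g p \<noteq> 0"
  shows "rsubst g (1 / (u p * (u q + u p))) = 1 / (g p * (g q + g p))"
proof -
  have a: "goodr g (u q + u p) \<and> rsubst g (u q + u p) = g q + g p"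
    using goodr_add[OF conjunct1[OF goodr_u] conjunct1[OF goodr_u]] goodr_u by simp
  have b: "goodr g (u p * (u q + u p)) \<and> rsubst g (u p * (u q + u p)) = g p * (g q + g p)"
    using goodr_mult[OF conjunct1[OF goodr_u] conjunct1[OF a]] a goodr_u by simp
  show ?thesis using goodr_divide[OF conjunct1[OF goodr_one] conjunct1[OF b]] b goodr_one assms by simp
qed

lemma rsubst_G:
  assumes "g p \<noteq> 0" "g q \<noteq> 0"
  shows "rsubst g (1 / (u p * u q)) = 1 / (g p * g q)"
proof -
  have b: "goodr g (u p * u q) \<and> rsubst g (u p * u q) = g p * g q"
    using goodr_mult[OF conjunct1[OF goodr_u] conjunct1[OF goodr_u]] goodr_u by simp
  show ?thesis using goodr_divide[OF conjunct1[OF goodr_one] conjunct1[OF b]] b goodr_one assms by simp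
qed

lemma covers_edge_shrub: "a \<noteq> b \<Longrightarrow> covers (edge_shrub a b) j i \<longleftrightarrow> j = b \<and> i = a"
proof
  assume ab: "a \<noteq> b" and c: "covers (edge_shrub a b) j i"
  hence e: "{i, j} = {a, b}" and h: "ht (edge_shrub a b) j = ht (edge_shrub a b) i + 1" unfolding covers_def by auto
  have "(i = a \<and> j = b) \<or> (i = b \<and> j = a)" using e ab by (metis doubleton_eq_iff)
  thus "j = b \<and> i = a" using h ab by auto
next
  assume "a \<noteq> b" "j = b \<and> i = a" thus "covers (edge_shrub a b) j i" unfolding covers_def by simp
qed

lemma shrub_edge: assumes ab: "a \<noteq> b" shows "is_shrub (edge_shrub a b)"
proof -
  have c: "covers (edge_shrub a b) j i \<longleftrightarrow> j = b \<and> i = a" for j i using covers_edge_shrub[OF ab] .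
  have ax1: "\<forall>a' b'. {a', b'} \<in> edges (edge_shrub a b) \<longrightarrow>
      ht (edge_shrub a b) a' = ht (edge_shrub a b) b' + 1 \<or> ht (edge_shrub a b) b' = ht (edge_shrub a b) a' + 1"
  proof (intro allI impI)
    fix a' b' assume "{a', b'} \<in> edges (edge_shrub a b)"
    hence "{a', b'} = {a, b}" by simp
    hence "(a' = a \<and> b' = b) \<or> (a' = b \<and> b' = a)" by (metis doubleton_eq_iff)
    thus "ht (edge_shrub a b) a' = ht (edge_shrub a b) b' + 1 \<or> ht (edge_shrub a b) b' = ht (edge_shrub a b) a' + 1"
      using ab by auto
  qed
  show ?thesis unfolding is_shrub_def
  proof (intro conjI)
    show "finite (verts (edge_shrub a b))" "verts (edge_shrub a b) \<noteq> {}" by simp_all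
    show "\<forall>e\<in>edges (edge_shrub a b). \<exists>a' b'. a' \<in> verts (edge_shrub a b) \<and> b' \<in> verts (edge_shrub a b) \<and> a' \<noteq> b' \<and> e = {a', b'}"
      using ab by auto
    show "\<forall>n. n \<notin> verts (edge_shrub a b) \<longrightarrow> ht (edge_shrub a b) n = 0" by simp
    show "\<forall>a' b'. {a', b'} \<in> edges (edge_shrub a b) \<longrightarrow>
      ht (edge_shrub a b) a' = ht (edge_shrub a b) b' + 1 \<or> ht (edge_shrub a b) b' = ht (edge_shrub a b) a' + 1"
      by (rule ax1)
    show "\<forall>j\<in>verts (edge_shrub a b). 0 < ht (edge_shrub a b) j \<longrightarrow> (\<exists>i. covers (edge_shrub a b) j i)"
      using c by auto
    show "\<not> (\<exists>a' b' c' d. distinct [a', b', c', d] \<and> covers (edge_shrub a b) a' b' \<and> covers (edge_shrub a b) a' c' \<and>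
        covers (edge_shrub a b) c' d \<and> {b', d} \<notin> edges (edge_shrub a b))"
      using c by auto
    show "\<not> (\<exists>a' b' c' d e. distinct [a', b', c', d, e] \<and> covers (edge_shrub a b) a' c' \<and> covers (edge_shrub a b) a' d \<and>
        covers (edge_shrub a b) b' d \<and> covers (edge_shrub a b) b' e \<and> {a', e} \<notin> edges (edge_shrub a b) \<and> {b', c'} \<notin> edges (edge_shrub a b))"
      using c by auto
  qed
qed

lemma shrub_roots: assumes ab: "a \<noteq> b" shows "is_shrub (two_roots a b)"
  unfolding is_shrub_def covers_def by simp

lemma shrub_unit: "is_shrub (unit_shrub a)"
  unfolding is_shrub_def covers_def by simp

lemma ren_edge1: "a \<noteq> b \<Longrightarrow> m \<noteq> b \<Longrightarrow> shrub_comp (edge_shrub a b) a (unit_shrub m) = edge_shrub m b"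
  by (rule shrub_eqI) (auto simp: shrub_comp_def insert_commute doubleton_eq_iff)

lemma ren_edge2: "a \<noteq> b \<Longrightarrow> m \<noteq> a \<Longrightarrow> shrub_comp (edge_shrub a b) b (unit_shrub m) = edge_shrub a m"
  by (rule shrub_eqI) (auto simp: shrub_comp_def insert_commute doubleton_eq_iff)

lemma ren_roots: "a \<noteq> b \<Longrightarrow> m \<noteq> b \<Longrightarrow> shrub_comp (two_roots a b) a (unit_shrub m) = two_roots m b"
  by (rule shrub_eqI) (auto simp: shrub_comp_def)

lemma two_roots_sym: "two_roots a b = two_roots b a"
  by (simp add: two_roots_def insert_commute)

lemma f_unit: "f_shrub (unit_shrub m) = 1 / u m"
proof -
  have r: "Ram (unit_shrub m) = {}" unfolding Ram_def ramified_def covers_def by simp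
  have g: "gen (unit_shrub m) {m} = {m}" using gen_subset[of "unit_shrub m" "{m}"] gen_contains[of "{m}" "unit_shrub m"] by auto
  show ?thesis unfolding f_shrub_def r by (simp add: g usum_def)
qed

lemma unit_eq: assumes P: "is_shrub P" and c: "card (verts P) = 1" shows "\<exists>m. P = unit_shrub m"
proof -
  obtain m where m: "verts P = {m}" using c card_1_singletonE by blast
  have w: "wf P" using shrub_wf[OF P] .
  have e: "edges P = {}"
  proof (rule ccontr)
    assume "edges P \<noteq> {}"
    then obtain e where e: "e \<in> edges P" by blast
    have "\<forall>e\<in>edges P. \<exists>a b. a \<in> verts P \<and> b \<in> verts P \<and> a \<noteq> b \<and> e = {a, b}" using w unfolding wf_def by simp
    then obtain a b where "a \<in> verts P" "b \<in> verts P" "a \<noteq> b" using e by blast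
    thus False using m by simp
  qed
  have h: "ht P n = 0" for n
  proof (cases "n = m")
    case True
    show ?thesis
    proof (rule ccontr)
      assume "ht P n \<noteq> 0"
      then obtain i where "covers P n i" using shrub_ax2[OF P, of n] True m by auto
      thus False using e unfolding covers_def by simp
    qed
  next
    case False thus ?thesis using w m unfolding wf_def by simp
  qed
  have "P = unit_shrub m" by (rule shrub_eqI) (use m e h in auto)
  thus ?thesis by blast
qed

context
  fixes \<kappa> :: "shrub \<Rightarrow> rfun"
  assumes mor: "arb_mould_morphism \<kappa>"
    and gen1: "\<kappa> (edge_shrub 2 1) = 1 / (u 1 * (u 1 + u 2))"
    and gen2: "\<kappa> (two_roots 1 2) = 1 / (u 1 * u 2)"
begin

lemma kunit: "\<kappa> (unit_shrub n) = 1 / u n"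
  using mor unfolding arb_mould_morphism_def by blast

lemma kcomp: "is_shrub P \<Longrightarrow> is_shrub Q \<Longrightarrow> i \<in> verts P \<Longrightarrow> verts Q \<inter> (verts P - {i}) = {} \<Longrightarrow>
   \<kappa> (shrub_comp P i Q) = mcomp (verts P) i (verts Q) (\<kappa> P) (\<kappa> Q)"
  using mor unfolding arb_mould_morphism_def by blast

lemma kren: assumes Q: "is_shrub Q" and i: "i \<in> verts Q" and m: "m \<notin> verts Q - {i}"
  shows "\<kappa> (shrub_comp Q i (unit_shrub m)) = rsubst (\<lambda>n. if n = i then u m else u n) (\<kappa> Q)"
proof -
  have "\<kappa> (shrub_comp Q i (unit_shrub m)) = mcomp (verts Q) i {m} (\<kappa> Q) (1 / u m)"
    using kcomp[OF Q shrub_unit i] m kunit by simp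
  also have "\<dots> = rsubst (\<lambda>n. if n = i then u m else u n) (\<kappa> Q)"
  proof -
    have e: "(\<lambda>n. if n = i then usum {m} else u n) = (\<lambda>n. if n = i then u m else u n)"
      by (rule ext) (simp add: usum_def)
    show ?thesis unfolding mcomp_def e using u_nz[of m] by (simp add: usum_def)
  qed
  finally show ?thesis .
qed

lemma kedge: assumes ab: "a \<noteq> b" shows "\<kappa> (edge_shrub a b) = 1 / (u b * (u a + u b))"
proof -
  define M where "M = a + b + 3"
  have M: "M \<noteq> 1" "M \<noteq> a" "M \<noteq> b" "M \<noteq> 2" unfolding M_def by auto
  have s1: "\<kappa> (edge_shrub M 1) = 1 / (u 1 * (u M + u 1))"
  proof -
    have "\<kappa> (edge_shrub M 1) = \<kappa> (shrub_comp (edge_shrub 2 1) 2 (unit_shrub M))"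
      using ren_edge1[of 2 1 M] M by simp
    also have "\<dots> = rsubst (\<lambda>n. if n = 2 then u M else u n) (\<kappa> (edge_shrub 2 1))"
      by (rule kren) (use M in \<open>auto intro: shrub_edge\<close>)
    also have "\<dots> = 1 / (u 1 * (u M + u 1))"
      unfolding gen1 add.commute[of "u 1" "u 2"] by (subst rsubst_F) (use u_nz u2_nz M in auto)
    finally show ?thesis .
  qed
  have s2: "\<kappa> (edge_shrub M b) = 1 / (u b * (u M + u b))"
  proof -
    have "\<kappa> (edge_shrub M b) = \<kappa> (shrub_comp (edge_shrub M 1) 1 (unit_shrub b))"
      using ren_edge2[of M 1 b] M by simp
    also have "\<dots> = rsubst (\<lambda>n. if n = 1 then u b else u n) (\<kappa> (edge_shrub M 1))"
      by (rule kren) (use M in \<open>auto intro: shrub_edge\<close>)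
    also have "\<dots> = 1 / (u b * (u M + u b))"
      unfolding s1 by (subst rsubst_F) (use u_nz u2_nz M in auto)
    finally show ?thesis .
  qed
  have "\<kappa> (edge_shrub a b) = \<kappa> (shrub_comp (edge_shrub M b) M (unit_shrub a))"
    using ren_edge1[of M b a] M ab by simp
  also have "\<dots> = rsubst (\<lambda>n. if n = M then u a else u n) (\<kappa> (edge_shrub M b))"
    by (rule kren) (use M ab in \<open>auto intro: shrub_edge\<close>)
  also have "\<dots> = 1 / (u b * (u a + u b))"
    unfolding s2 by (subst rsubst_F) (use u_nz u2_nz M ab in auto)
  finally show ?thesis .
qed

lemma kroots: assumes ab: "a \<noteq> b" shows "\<kappa> (two_roots a b) = 1 / (u a * u b)"
proof -
  define M where "M = a + b + 3"
  have M: "M \<noteq> 1" "M \<noteq> a" "M \<noteq> b" "M \<noteq> 2" unfolding M_def by auto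
  have s1: "\<kappa> (two_roots 2 M) = 1 / (u M * u 2)"
  proof -
    have "\<kappa> (two_roots 2 M) = \<kappa> (shrub_comp (two_roots 1 2) 1 (unit_shrub M))"
      using ren_roots[of 1 2 M] M two_roots_sym by simp
    also have "\<dots> = rsubst (\<lambda>n. if n = 1 then u M else u n) (\<kappa> (two_roots 1 2))"
      by (rule kren) (use M in \<open>auto intro: shrub_roots\<close>)
    also have "\<dots> = 1 / (u M * u 2)"
      unfolding gen2 by (subst rsubst_G) (use u_nz M in auto)
    finally show ?thesis .
  qed
  have s2: "\<kappa> (two_roots M b) = 1 / (u M * u b)"
  proof -
    have "\<kappa> (two_roots M b) = \<kappa> (shrub_comp (two_roots 2 M) 2 (unit_shrub b))"
      using ren_roots[of 2 M b] M two_roots_sym by simp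
    also have "\<dots> = rsubst (\<lambda>n. if n = 2 then u b else u n) (\<kappa> (two_roots 2 M))"
      by (rule kren) (use M in \<open>auto intro: shrub_roots\<close>)
    also have "\<dots> = 1 / (u M * u b)"
      unfolding s1 by (subst rsubst_G) (use u_nz M in auto)
    finally show ?thesis .
  qed
  have "\<kappa> (two_roots a b) = \<kappa> (shrub_comp (two_roots M b) M (unit_shrub a))"
    using ren_roots[of M b a] M ab by simp
  also have "\<dots> = rsubst (\<lambda>n. if n = M then u a else u n) (\<kappa> (two_roots M b))"
    by (rule kren) (use M ab in \<open>auto intro: shrub_roots\<close>)
  also have "\<dots> = 1 / (u a * u b)"
    unfolding s2 by (subst rsubst_G) (use u_nz M ab in auto)
  finally show ?thesis .
qed

lemma sb_mcomp: "mcomp I x {x, y} F G = usum {x, y} * G * rsubst (sb x y) F"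
  unfolding mcomp_def sb_def by simp

lemma kmain: "is_shrub P \<Longrightarrow> \<kappa> P = f_shrub P"
proof (induction "card (verts P)" arbitrary: P rule: less_induct)
  case less
  have P: "is_shrub P" by fact
  have fin: "finite (verts P)" using shrub_fin[OF P] .
  have c0: "card (verts P) \<noteq> 0" using fin shrub_ne[OF P] by simp
  show ?case
  proof (cases "card (verts P) = 1")
    case True
    then obtain m where "P = unit_shrub m" using unit_eq[OF P] by blast
    thus ?thesis using kunit f_unit by simp
  next
    case False
    hence "2 \<le> card (verts P)" using c0 by simp
    then obtain x y where xy: "leaf P x y \<or> twin P x y" using decomp[OF P] by blast
    thus ?thesis
    proof
      assume l: "leaf P x y"
      have xv: "x \<in> verts P" "y \<in> verts P" "x \<noteq> y" using l unfolding leaf_def by auto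
      have P': "is_shrub (del P y)" using shrub_del_leaf[OF P l] .
      have IH: "\<kappa> (del P y) = f_shrub (del P y)"
        using less.hyps[OF card_del[OF fin xv(2)] P'] .
      have vd: "verts (del P y) = verts P - {y}" unfolding del_def by auto
      have "\<kappa> P = \<kappa> (shrub_comp (del P y) x (edge_shrub x y))" using comp_leaf[OF P l] by simp
      also have "\<dots> = mcomp (verts (del P y)) x {x, y} (\<kappa> (del P y)) (\<kappa> (edge_shrub x y))"
        using kcomp[OF P' shrub_edge[OF xv(3)]] vd xv by auto
      also have "\<dots> = usum {x, y} * (1 / (u y * (u x + u y))) * rsubst (sb x y) (f_shrub (del P y))"
        unfolding sb_mcomp kedge[OF xv(3)] IH ..
      also have "\<dots> = (1 / u y) * rsubst (sb x y) (f_shrub (del P y))"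
        using u2_nz[OF xv(3)] xv(3) by (simp add: usum_def)
      also have "\<dots> = f_shrub P" using f_leaf[OF P l P'] by simp
      finally show ?thesis .
    next
      assume t: "twin P x y"
      have xv: "x \<in> verts P" "y \<in> verts P" "x \<noteq> y" using tw_facts[OF t] by auto
      have P': "is_shrub (del P y)" using shrub_del_twin[OF P t] .
      have IH: "\<kappa> (del P y) = f_shrub (del P y)"
        using less.hyps[OF card_del[OF fin xv(2)] P'] .
      have vd: "verts (del P y) = verts P - {y}" unfolding del_def by auto
      have "\<kappa> P = \<kappa> (shrub_comp (del P y) x (two_roots x y))" using comp_twin[OF P t] by simp
      also have "\<dots> = mcomp (verts (del P y)) x {x, y} (\<kappa> (del P y)) (\<kappa> (two_roots x y))"
        using kcomp[OF P' shrub_roots[OF xv(3)]] vd xv by auto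
      also have "\<dots> = usum {x, y} * (1 / (u x * u y)) * rsubst (sb x y) (f_shrub (del P y))"
        unfolding sb_mcomp kroots[OF xv(3)] IH ..
      also have "\<dots> = f_shrub P" using f_twin[OF P t P'] by simp
      finally show ?thesis .
    qed
  qed
qed

end

theorem mainTheorem12:
  fixes \<kappa> :: "shrub \<Rightarrow> rfun" and P :: shrub
  assumes "arb_mould_morphism \<kappa>"
    and "\<kappa> (edge_shrub 2 1) = 1 / (u 1 * (u 1 + u 2))"
    and "\<kappa> (two_roots 1 2) = 1 / (u 1 * u 2)"
    and "is_shrub P"
  shows "\<kappa> P = f_shrub P"
  using kmain[OF assms(1,2,3) assms(4)] .


end
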